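(* Let $d\ge2$, let $T:W\to\mathbb{CP}^d$ be a $1$-generic TCD map on a minimal BTB graph $G$, and let $H$ be a hyperplane generic with respect to $T$. Then every section $\sigma_H(T)$ is a TCD map on $\sigma(G)$: for every black vertex of $\sigma(G)$, the images under $\sigma_H(T)$ of its three white neighbours are pairwise distinct and lie on a line.
   Context: A BTB graph is a finite planar bipartite graph $G$ (black $B$, white $W$, faces $F$) in a closed disk or a cactus (a disk with some boundary white vertices identified by a noncrossing partition). It has boundary white vertices $w_1^\partial,\dots,w_n^\partial$ in clockwise order and every black vertex of degree $3$. It is minimal if zig-zag paths (turning maximally left at white and right at black vertices) are never closed, never traverse an edge twice, and no two both traverse two distinct edges $e_1$ then $e_2$. A TCD map is $T:W\to\mathbb{CP}^d$ such that the neighbours of each black vertex have pairwise distinct collinear images. $H$ is generic for $T$ if it contains no $T(w)$. $T$ is $1$-generic if (i) for every face $f$ and any three white vertices on its boundary, their images span a plane, and (ii) consecutive non-identified boundary white vertices have distinct images. Sections. $G^{\mathrm{int}}$ is $G$ with an added black vertex $b^\partial_{i,i+1}$ on the boundary between $w_i^\partial$ and $w_{i+1}^\partial$, joined to both. The star graph $\hat G$ has a white vertex $\hat w_b$ for each black vertex $b$ of $G^{\mathrm{int}}$ and a black vertex $\hat b_f$ in each face $f$ of $G^{\mathrm{int}}$, with an edge $\hat b_f\hat w_b$ when $b$ is on the boundary of $f$. If $w_i^\partial,w_{i+1}^\partial$ are identified, the leaf $\hat b_f$ of the face between them, $\hat w_{b^\partial_{i,i+1}}$ and their edge are removed. $\hat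 G$ is viewed in the original disk. Its faces correspond bijectively to white vertices of $G$. $\sigma(G)$ is obtained from $\hat G$ by replacing each black vertex of degree $>3$ by a bipartite tree with trivalent black vertices and degree-$2$ internal white vertices (keeping cyclic order), and then contracting every degree-$2$ black vertex (merging its two white neighbours). Write $\hat f_w$ for the face of $\sigma(G)$ corresponding to $w\in W$. $\sigma_H(T)(\hat w)=L(\hat w)\cap H$, where $L(\hat w)$ is the span of $\{T(w):\hat f_w\text{ incident to }\hat w\}$, a line by $1$-genericity. *)

theory Defs
  imports "HOL-Analysis.Analysis"
begin

section \<open>Combinatorial planar maps (rotation systems)\<close>

text \<open>A map is given by a finite set of darts (half-edges).  src d is the vertex at
which dart d starts, opp d is the other half of the same edge, and nxt d is the dart
following d in the clockwise cyclic order around src d.\<close>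

record ('v, 'd) bmap =
  verts  :: "'v set"
  blacks :: "'v set"
  darts  :: "'d set"
  src    :: "'d \<Rightarrow> 'v"
  opp    :: "'d \<Rightarrow> 'd"
  nxt    :: "'d \<Rightarrow> 'd"

definition whites :: "('v, 'd) bmap \<Rightarrow> 'v set" where
  "whites M = verts M - blacks M"

definition darts_at :: "('v, 'd) bmap \<Rightarrow> 'v \<Rightarrow> 'd set" where
  "darts_at M v = {d \<in> darts M. src M d = v}"

definition degree :: "('v, 'd) bmap \<Rightarrow> 'v \<Rightarrow> nat" where
  "degree M v = card (darts_at M v)"

text \<open>Face permutation: follow a dart and turn maximally left (clockwise-next dart
after the reversed dart).  Its orbits are the boundary walks of the faces.\<close>

definition phi :: "('v, 'd) bmap \<Rightarrow> 'd \<Rightarrow> 'd" where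
  "phi M d = nxt M (opp M d)"

definition face_orbit :: "('v, 'd) bmap \<Rightarrow> 'd \<Rightarrow> 'd set" where
  "face_orbit M d = {(phi M ^^ k) d | k. True}"

definition faces :: "('v, 'd) bmap \<Rightarrow> 'd set set" where
  "faces M = face_orbit M ` darts M"

definition edge_rel :: "('v, 'd) bmap \<Rightarrow> ('v \<times> 'v) set" where
  "edge_rel M = {(src M d, src M (opp M d)) | d. d \<in> darts M}"

text \<open>A connected bipartite map embedded in the sphere (genus 0, via Euler's formula).\<close>

definition plane_bip_map :: "('v, 'd) bmap \<Rightarrow> bool" where
  "plane_bip_map M \<longleftrightarrow>
     finite (verts M) \<and> finite (darts M) \<and> blacks M \<subseteq> verts M \<and>
     (\<forall>d\<in>darts M. src M d \<in> verts M \<and> opp M d \<in> darts M \<and> opp M d \<noteq> d \<and>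
                   opp M (opp M d) = d) \<and>
     (\<forall>d\<in>darts M. src M d \<in> blacks M \<longleftrightarrow> src M (opp M d) \<notin> blacks M) \<and>
     bij_betw (nxt M) (darts M) (darts M) \<and>
     (\<forall>d\<in>darts M. src M (nxt M d) = src M d) \<and>
     (\<forall>d\<in>darts M. \<forall>d'\<in>darts M. src M d = src M d' \<longrightarrow> (\<exists>k. (nxt M ^^ k) d = d')) \<and>
     (\<forall>u\<in>verts M. \<forall>v\<in>verts M. (u, v) \<in> (edge_rel M)\<^sup>*) \<and>
     int (card (verts M)) - int (card (darts M) div 2) + int (card (faces M)) = 2"

section \<open>BTB graphs, encoded through the graph G^int\<close>

text \<open>M is the graph G^int of a BTB graph G with n boundary white vertices
wb 0, ..., wb (n-1) (in clockwise order, possibly with repetitions in the cactus case),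
bb i being the added black vertex between wb i and wb ((i+1) mod n).  The dart a0 is the
dart from wb 0 to bb 0; the outer face (the complement of the disk/cactus) has boundary
walk wb 0, bb 0, wb 1, bb 1, ..., wb (n-1), bb (n-1).\<close>

definition btb_int :: "('v, 'd) bmap \<Rightarrow> nat \<Rightarrow> (nat \<Rightarrow> 'v) \<Rightarrow> (nat \<Rightarrow> 'v) \<Rightarrow> 'd \<Rightarrow> bool" where
  "btb_int M n wb bb a0 \<longleftrightarrow>
     plane_bip_map M \<and> n \<ge> 1 \<and> a0 \<in> darts M \<and>
     inj_on bb {..<n} \<and>
     (\<forall>i<n. wb i \<in> whites M \<and> bb i \<in> blacks M \<and> degree M (bb i) = 2 \<and>
            src M ((phi M ^^ (2*i)) a0) = wb i \<and>
            src M ((phi M ^^ (2*i+1)) a0) = bb i) \<and>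
     (phi M ^^ (2*n)) a0 = a0 \<and>
     (\<forall>b \<in> blacks M - bb ` {..<n}. degree M b = 3)"

definition outer_face :: "('v, 'd) bmap \<Rightarrow> 'd \<Rightarrow> 'd set" where
  "outer_face M a0 = face_orbit M a0"

text \<open>Faces of G (= inner faces of G^int) and the white vertices on their boundary.\<close>

definition inner_faces :: "('v, 'd) bmap \<Rightarrow> 'd \<Rightarrow> 'd set set" where
  "inner_faces M a0 = faces M - {outer_face M a0}"

definition face_whites :: "('v, 'd) bmap \<Rightarrow> 'd set \<Rightarrow> 'v set" where
  "face_whites M F = {src M d | d. d \<in> F \<and> src M d \<in> whites M}"

text \<open>The graph G itself: G^int without the added boundary black vertices.\<close>

definition G_blacks :: "('v, 'd) bmap \<Rightarrow> nat \<Rightarrow> (nat \<Rightarrow> 'v) \<Rightarrow> 'v set" where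
  "G_blacks M n bb = blacks M - bb ` {..<n}"

definition G_darts :: "('v, 'd) bmap \<Rightarrow> nat \<Rightarrow> (nat \<Rightarrow> 'v) \<Rightarrow> 'd set" where
  "G_darts M n bb = {d \<in> darts M. src M d \<notin> bb ` {..<n} \<and> src M (opp M d) \<notin> bb ` {..<n}}"

text \<open>zz_step: the (directed) zig-zag path traversing dart d next traverses dart d'.
At a white vertex it turns maximally left (clockwise-next dart); at a black vertex
maximally right (counterclockwise-next dart).  A path ends at a boundary white vertex
when the maximal left turn would cross the boundary of the disk (i.e. the next dart of
G^int goes to an added boundary black vertex).\<close>

definition zz_step :: "('v, 'd) bmap \<Rightarrow> nat \<Rightarrow> (nat \<Rightarrow> 'v) \<Rightarrow> ('d \<times> 'd) set" where
  "zz_step M n bb = {(d, d'). d \<in> G_darts M n bb \<and> d' \<in> G_darts M n bb \<and>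
      (src M (opp M d) \<in> whites M \<longrightarrow> d' = nxt M (opp M d)) \<and>
      (src M (opp M d) \<notin> whites M \<longrightarrow> nxt M d' = opp M d)}"

text \<open>Minimal: zig-zag paths are never closed, never traverse an edge twice, and no two
of them both traverse two distinct edges e1 then e2.  (Each edge is traversed by exactly
two zig-zag paths, one through each of its darts.)\<close>

definition minimal :: "('v, 'd) bmap \<Rightarrow> nat \<Rightarrow> (nat \<Rightarrow> 'v) \<Rightarrow> bool" where
  "minimal M n bb \<longleftrightarrow>
     (\<forall>d. (d, d) \<notin> (zz_step M n bb)\<^sup>+) \<and>
     (\<forall>d. (d, opp M d) \<notin> (zz_step M n bb)\<^sup>+) \<and>
     (\<forall>d1 d2. d2 \<noteq> d1 \<and> d2 \<noteq> opp M d1 \<and> (d1, d2) \<in> (zz_step M n bb)\<^sup>+ \<longrightarrow>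
              (opp M d1, opp M d2) \<notin> (zz_step M n bb)\<^sup>+)"

section \<open>Projective geometry in CP^d, d+1 = CARD('n)\<close>

text \<open>A point of CP^d is a 1-dimensional complex subspace of complex^'n, a line a
2-dimensional one, a plane a 3-dimensional one, a hyperplane one of dimension d.\<close>

definition ppoint :: "(complex ^ 'n) set \<Rightarrow> bool" where
  "ppoint P \<longleftrightarrow> vec.subspace P \<and> vec.dim P = 1"

definition pline :: "(complex ^ 'n) set \<Rightarrow> bool" where
  "pline L \<longleftrightarrow> vec.subspace L \<and> vec.dim L = 2"

definition hyperplane :: "(complex ^ 'n) set \<Rightarrow> bool" where
  "hyperplane H \<longleftrightarrow> vec.subspace H \<and> vec.dim H = CARD('n) - 1"

definition collinear3 :: "(complex ^ 'n) set \<Rightarrow> (complex ^ 'n) set \<Rightarrow> (complex ^ 'n) set \<Rightarrow> bool" where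
  "collinear3 P Q R \<longleftrightarrow> (\<exists>L. pline L \<and> P \<subseteq> L \<and> Q \<subseteq> L \<and> R \<subseteq> L)"

definition tcd_triple :: "(complex ^ 'n) set \<Rightarrow> (complex ^ 'n) set \<Rightarrow> (complex ^ 'n) set \<Rightarrow> bool" where
  "tcd_triple P Q R \<longleftrightarrow> ppoint P \<and> ppoint Q \<and> ppoint R \<and>
      P \<noteq> Q \<and> Q \<noteq> R \<and> P \<noteq> R \<and> collinear3 P Q R"

text \<open>TCD map on the BTB graph G (neighbours of a black vertex are counted via its three
darts, so multiple edges are counted with multiplicity).\<close>

definition tcd_map :: "('v, 'd) bmap \<Rightarrow> nat \<Rightarrow> (nat \<Rightarrow> 'v) \<Rightarrow> ('v \<Rightarrow> (complex ^ 'n) set) \<Rightarrow> bool" where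
  "tcd_map M n bb T \<longleftrightarrow>
     (\<forall>w\<in>whites M. ppoint (T w)) \<and>
     (\<forall>b\<in>G_blacks M n bb. \<forall>d1\<in>darts_at M b. \<forall>d2\<in>darts_at M b. \<forall>d3\<in>darts_at M b.
        d1 \<noteq> d2 \<and> d2 \<noteq> d3 \<and> d1 \<noteq> d3 \<longrightarrow>
        tcd_triple (T (src M (opp M d1))) (T (src M (opp M d2))) (T (src M (opp M d3))))"

definition one_generic :: "('v, 'd) bmap \<Rightarrow> nat \<Rightarrow> (nat \<Rightarrow> 'v) \<Rightarrow> 'd \<Rightarrow> ('v \<Rightarrow> (complex ^ 'n) set) \<Rightarrow> bool" where
  "one_generic M n wb a0 T \<longleftrightarrow>
     (\<forall>F\<in>inner_faces M a0. \<forall>u\<in>face_whites M F. \<forall>v\<in>face_whites M F. \<forall>w\<in>face_whites M F.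
        u \<noteq> v \<and> v \<noteq> w \<and> u \<noteq> w \<longrightarrow> vec.dim (vec.span (T u \<union> T v \<union> T w)) = 3) \<and>
     (\<forall>i<n. wb i \<noteq> wb (Suc i mod n) \<longrightarrow> T (wb i) \<noteq> T (wb (Suc i mod n)))"

definition generic_hyperplane :: "('v, 'd) bmap \<Rightarrow> ('v \<Rightarrow> (complex ^ 'n) set) \<Rightarrow> (complex ^ 'n) set \<Rightarrow> bool" where
  "generic_hyperplane M T H \<longleftrightarrow> hyperplane H \<and> (\<forall>w\<in>whites M. \<not> T w \<subseteq> H)"

text \<open>For an inner face F of G^int and a dart d0 in F starting at a black vertex, the
boundary of F reads fb d0 0, fw d0 0, fb d0 1, fw d0 1, ..., fb d0 (k-1), fw d0 (k-1)
with k = fdeg d0 the number of black (= white) corners of F.  The black vertex of the star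
graph in F has degree k, its neighbours being the white vertices for fb d0 j, and the
face of the star graph between the neighbours for fb d0 j and fb d0 (j+1) is the face
corresponding to fw d0 j.\<close>

definition fdeg :: "('v, 'd) bmap \<Rightarrow> 'd \<Rightarrow> nat" where
  "fdeg M d0 = card (face_orbit M d0) div 2"

definition fb :: "('v, 'd) bmap \<Rightarrow> 'd \<Rightarrow> nat \<Rightarrow> 'v" where
  "fb M d0 j = src M ((phi M ^^ (2*j)) d0)"

definition fw :: "('v, 'd) bmap \<Rightarrow> 'd \<Rightarrow> nat \<Rightarrow> 'v" where
  "fw M d0 j = src M ((phi M ^^ (2*j+1)) d0)"

definition face_starts :: "('v, 'd) bmap \<Rightarrow> 'd \<Rightarrow> 'd set" where
  "face_starts M a0 = {d0 \<in> darts M. d0 \<notin> outer_face M a0 \<and> src M d0 \<in> blacks M}"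

text \<open>Contraction of the degree-2 black vertices of the star graph merges the white
vertices of the star graph corresponding to the two black vertices on an inner face with
two black corners.  White vertices of the star graph are indexed by the black vertices of
G^int; merged vertices are the classes of the generated equivalence relation.\<close>

definition merge_rel :: "('v, 'd) bmap \<Rightarrow> 'd \<Rightarrow> ('v \<times> 'v) set" where
  "merge_rel M a0 = {(fb M d0 0, fb M d0 1) | d0. d0 \<in> face_starts M a0 \<and> fdeg M d0 = 2}"

definition white_nbrs :: "('v, 'd) bmap \<Rightarrow> 'v \<Rightarrow> 'v set" where
  "white_nbrs M b = {src M (opp M d) | d. d \<in> darts_at M b}"

text \<open>Set of white vertices w of G such that the face of sigma(G) corresponding to w is
incident to the (merged) white vertex of sigma(G) coming from the black vertex b of G^int.\<close>

definition merged_faces :: "('v, 'd) bmap \<Rightarrow> 'd \<Rightarrow> 'v \<Rightarrow> 'v set" where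
  "merged_faces M a0 b =
     (\<Union>b' \<in> {b'. (b, b') \<in> (merge_rel M a0 \<union> (merge_rel M a0)\<inverse>)\<^sup>*}. white_nbrs M b')"

text \<open>Bipartite trees with trivalent black vertices and degree-2 internal white vertices
whose leaves are the k neighbours (in cyclic order) correspond to triangulations of a
k-gon whose corners 0..k-1 are the k surrounding faces: tree black vertices are the
triangles, internal white vertices the diagonals, leaves the sides of the polygon.
tri i k A: A is a triangulation of the convex polygon with corners i, i+1, ..., k.\<close>

inductive tri :: "nat \<Rightarrow> nat \<Rightarrow> (nat \<times> nat \<times> nat) set \<Rightarrow> bool" where
  tri_edge: "tri i (Suc i) {}"
| tri_split: "i < j \<Longrightarrow> j < k \<Longrightarrow> tri i j A \<Longrightarrow> tri j k B \<Longrightarrow> tri i k (insert (i, j, k) (A \<union> B))"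

text \<open>A choice of trees for sigma(G): R contains exactly one starting dart for each inner
face with at least three black corners, and tc d0 is the chosen tree (triangulation) for
that face.  (Faces with three black corners have the unique triangulation.)\<close>

definition sigma_choice :: "('v, 'd) bmap \<Rightarrow> 'd \<Rightarrow> 'd set \<Rightarrow> ('d \<Rightarrow> (nat \<times> nat \<times> nat) set) \<Rightarrow> bool" where
  "sigma_choice M a0 R tc \<longleftrightarrow>
     R \<subseteq> face_starts M a0 \<and>
     (\<forall>d0\<in>R. fdeg M d0 \<ge> 3 \<and> tri 0 (fdeg M d0 - 1) (tc d0)) \<and>
     (\<forall>d\<in>face_starts M a0. fdeg M d \<ge> 3 \<longrightarrow> (\<exists>!d0\<in>R. d0 \<in> face_orbit M d))"

text \<open>The white vertex of sigma(G) adjacent to the tree black vertex (triangle) along the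
side (p, q), p < q, of the polygon of face d0, represented by the set of white vertices
w of G whose faces of sigma(G) are incident to it: a polygon side (p, p+1) resp.
(0, k-1) is the leaf for fb d0 (p+1) resp. fb d0 0 (after merging); a diagonal is an
internal white vertex of the tree, incident to the two faces for fw d0 p and fw d0 q.\<close>

definition side_faces :: "('v, 'd) bmap \<Rightarrow> 'd \<Rightarrow> 'd \<Rightarrow> nat \<Rightarrow> nat \<Rightarrow> 'v set" where
  "side_faces M a0 d0 p q =
     (if q = Suc p then merged_faces M a0 (fb M d0 q)
      else if p = 0 \<and> q = fdeg M d0 - 1 then merged_faces M a0 (fb M d0 0)
      else {fw M d0 p, fw M d0 q})"

text \<open>The section: sigma_H(T)(w^) = L(w^) \<inter> H, L(w^) the span of the incident images.\<close>

definition section_pt :: "('v \<Rightarrow> (complex ^ 'n) set) \<Rightarrow> (complex ^ 'n) set \<Rightarrow> 'v set \<Rightarrow> (complex ^ 'n) set" where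
  "section_pt T H S = vec.span (\<Union>w\<in>S. T w) \<inter> H"

end

theory Submission
  imports Defs
begin

definition orb :: "('a \<Rightarrow> 'a) \<Rightarrow> 'a \<Rightarrow> 'a set" where
  "orb f x = {(f ^^ k) x | k. True}"

definition orbs :: "('a \<Rightarrow> 'a) \<Rightarrow> 'a set \<Rightarrow> 'a set set" where
  "orbs f D = orb f ` D"

definition tr :: "'a \<Rightarrow> 'a \<Rightarrow> 'a \<Rightarrow> 'a" where
  "tr x y z = (if z = x then y else if z = y then x else z)"

lemma tr_tr[simp]: "tr x y (tr x y z) = z"
  unfolding tr_def by auto

lemma funpow_in: "f ` D \<subseteq> D \<Longrightarrow> x \<in> D \<Longrightarrow> (f ^^ k) x \<in> D"
  by (induction k) auto

lemma orb_subset: "f ` D \<subseteq> D \<Longrightarrow> x \<in> D \<Longrightarrow> orb f x \<subseteq> D"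
  unfolding orb_def by (auto intro: funpow_in)

lemma self_in_orb: "x \<in> orb f x"
  unfolding orb_def by (auto intro: exI[of _ 0])

lemma funpow_in_orb: "(f ^^ k) x \<in> orb f x"
  unfolding orb_def by auto

lemma funpow_cong_on:
  assumes "\<And>d. d \<in> D \<Longrightarrow> f d = g d" "f ` D \<subseteq> D" "x \<in> D"
  shows "(f ^^ k) x = (g ^^ k) x"
  using assms by (induction k) (auto simp: funpow_in)

lemma orb_cong_on:
  assumes "\<And>d. d \<in> D \<Longrightarrow> f d = g d" "f ` D \<subseteq> D" "x \<in> D"
  shows "orb f x = orb g x"
  unfolding orb_def using funpow_cong_on[OF assms] by auto

lemma orbs_cong_on:
  assumes "\<And>d. d \<in> D \<Longrightarrow> f d = g d" "f ` D \<subseteq> D"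
  shows "orbs f D = orbs g D"
  unfolding orbs_def using orb_cong_on[OF assms] by (auto simp: image_def)

lemma orb_closed:
  assumes "x \<in> S" "\<And>z. z \<in> S \<Longrightarrow> g z \<in> S"
  shows "orb g x \<subseteq> S"
proof
  fix z assume "z \<in> orb g x"
  then obtain k where k: "z = (g ^^ k) x" unfolding orb_def by auto
  have "(g ^^ k) x \<in> S" by (induction k) (use assms in auto)
  then show "z \<in> S" using k by simp
qed

lemma bij_tr: "x \<in> D \<Longrightarrow> y \<in> D \<Longrightarrow> bij_betw (tr x y) D D"
  by (rule bij_betw_byWitness[of _ "tr x y"]) (auto simp: tr_def)

locale perm_on =
  fixes f :: "'a \<Rightarrow> 'a" and D :: "'a set"
  assumes fin: "finite D" and bij: "bij_betw f D D"
begin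

lemma maps: "f ` D \<subseteq> D" using bij by (simp add: bij_betw_def)
lemma inj: "inj_on f D" using bij by (simp add: bij_betw_def)
lemma surj: "f ` D = D" using bij by (simp add: bij_betw_def)

lemma inj_funpow: "inj_on (f ^^ k) D"
proof (induction k)
  case 0 then show ?case by simp
next
  case (Suc k)
  have "inj_on (f \<circ> (f ^^ k)) D"
    by (rule comp_inj_on[OF Suc]) (meson inj inj_on_subset funpow_in maps image_subsetI)
  then show ?case by (simp add: o_def)
qed

lemma orb_sub: "x \<in> D \<Longrightarrow> orb f x \<subseteq> D"
  using orb_subset[OF maps] .

lemma period_ex: assumes "x \<in> D" shows "\<exists>m>0. (f ^^ m) x = x"
proof -
  let ?g = "\<lambda>k. (f ^^ k) x"
  have "?g ` {..card D} \<subseteq> D" using funpow_in[OF maps assms] by auto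
  moreover have "card {..card D} > card D" by simp
  ultimately have "\<not> inj_on ?g {..card D}"
    using card_inj_on_le[of ?g "{..card D}" D] fin by (meson not_le)
  then obtain i j where ij: "i \<le> card D" "j \<le> card D" "i \<noteq> j" "?g i = ?g j"
    unfolding inj_on_def by auto
  then obtain i j where ij: "i < j" "?g i = ?g j"
    by (metis linorder_neqE_nat)
  then have "(f ^^ i) ((f ^^ (j - i)) x) = (f ^^ i) x"
    by (metis add_diff_inverse_nat comp_apply funpow_add less_imp_not_less)
  then have "(f ^^ (j - i)) x = x"
    using inj_funpow[of i] assms funpow_in[OF maps assms]
    by (meson inj_onD)
  then show ?thesis using ij by (intro exI[of _ "j - i"]) auto
qed

definition per :: "'a \<Rightarrow> nat" where
  "per x = (LEAST m. 0 < m \<and> (f ^^ m) x = x)"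

lemma per: assumes "x \<in> D" shows "0 < per x" "(f ^^ per x) x = x"
  using LeastI_ex[OF period_ex[OF assms]] unfolding per_def by auto

lemma per_least: "0 < m \<Longrightarrow> m < per x \<Longrightarrow> (f ^^ m) x \<noteq> x"
  unfolding per_def using not_less_Least by blast

lemma funpow_mult_per: assumes "x \<in> D" shows "(f ^^ (per x * c)) x = x"
proof (induction c)
  case 0 then show ?case by simp
next
  case (Suc c)
  have "(f ^^ (per x * Suc c)) x = (f ^^ (per x)) ((f ^^ (per x * c)) x)"
    by (simp add: funpow_add add.commute)
  then show ?case using Suc per[OF assms] by simp
qed

lemma funpow_mod: assumes "x \<in> D" shows "(f ^^ k) x = (f ^^ (k mod per x)) x"
proof -
  have "(f ^^ k) x = (f ^^ (k mod per x + per x * (k div per x))) x" by simp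
  also have "\<dots> = (f ^^ (k mod per x)) ((f ^^ (per x * (k div per x))) x)"
    by (simp only: funpow_add o_apply)
  finally show ?thesis using funpow_mult_per[OF assms] by simp
qed

lemma inj_per: assumes "x \<in> D" shows "inj_on (\<lambda>i. (f ^^ i) x) {..<per x}"
proof (rule inj_onI, rule ccontr)
  fix i j assume a: "i \<in> {..<per x}" "j \<in> {..<per x}" "(f ^^ i) x = (f ^^ j) x" "i \<noteq> j"
  have key: "\<And>i j. i < j \<Longrightarrow> j < per x \<Longrightarrow> (f ^^ i) x = (f ^^ j) x \<Longrightarrow> False"
  proof -
    fix i j assume b: "i < j" "j < per x" "(f ^^ i) x = (f ^^ j) x"
    then have "(f ^^ i) ((f ^^ (j - i)) x) = (f ^^ i) x"
      by (metis add_diff_inverse_nat comp_apply funpow_add less_imp_not_less)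
    then have "(f ^^ (j - i)) x = x"
      using inj_funpow[of i] assms funpow_in[OF maps assms] by (meson inj_onD)
    then show False using per_least[of "j - i" x] b by auto
  qed
  show False using a key[of i j] key[of j i] by (metis linorder_neqE_nat lessThan_iff)
qed

lemma orb_per: assumes "x \<in> D" shows "orb f x = (\<lambda>i. (f ^^ i) x) ` {..<per x}"
proof
  show "orb f x \<subseteq> (\<lambda>i. (f ^^ i) x) ` {..<per x}"
  proof
    fix z assume "z \<in> orb f x"
    then obtain k where "z = (f ^^ k) x" unfolding orb_def by auto
    then have "z = (f ^^ (k mod per x)) x" using funpow_mod[OF assms] by simp
    moreover have "k mod per x < per x" using per[OF assms] by simp
    ultimately show "z \<in> (\<lambda>i. (f ^^ i) x) ` {..<per x}" by blast
  qed
  show "(\<lambda>i. (f ^^ i) x) ` {..<per x} \<subseteq> orb f x"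
    unfolding orb_def by auto
qed

lemma card_orb: assumes "x \<in> D" shows "card (orb f x) = per x"
  using orb_per[OF assms] inj_per[OF assms] by (simp add: card_image)

lemma orb_mem_eq: assumes "x \<in> D" "y \<in> orb f x" shows "orb f y = orb f x"
proof -
  obtain k where k: "y = (f ^^ k) x" using assms(2) unfolding orb_def by auto
  show ?thesis
  proof
    show "orb f y \<subseteq> orb f x"
    proof
      fix z assume "z \<in> orb f y"
      then obtain j where "z = (f ^^ j) ((f ^^ k) x)" unfolding orb_def k by auto
      then have "z = (f ^^ (j + k)) x" by (simp add: funpow_add)
      then show "z \<in> orb f x" unfolding orb_def by auto
    qed
    show "orb f x \<subseteq> orb f y"
    proof
      fix z assume "z \<in> orb f x"
      then obtain i where i: "z = (f ^^ i) x" unfolding orb_def by auto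
      let ?p = "per x"
      define j where "j = i + ?p - k mod ?p"
      have m1: "k mod ?p < ?p" using per(1)[OF assms(1)] by simp
      have m2: "k = k mod ?p + ?p * (k div ?p)" by simp
      have "j + k = i + ?p * (Suc (k div ?p))"
      proof -
        have "j + k = i + ?p + ?p * (k div ?p)" unfolding j_def using m1 m2 by linarith
        then show ?thesis by simp
      qed
      then have "(f ^^ j) y = (f ^^ i) ((f ^^ (?p * (Suc (k div ?p)))) x)"
        unfolding k by (metis comp_apply funpow_add)
      then have "(f ^^ j) y = z" using funpow_mult_per[OF assms(1), of "Suc (k div ?p)"] i by simp
      then show "z \<in> orb f y" unfolding orb_def by auto
    qed
  qed
qed

lemma orb_inter: assumes "x \<in> D" "y \<in> D" "orb f x \<inter> orb f y \<noteq> {}" shows "orb f x = orb f y"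
  using assms orb_mem_eq orb_sub by (metis disjoint_iff subsetD)

lemma finite_orbs: "finite (orbs f D)"
  unfolding orbs_def using fin by simp

end


context perm_on begin

lemma tr_split:
  assumes xD: "x \<in> D" and yD: "y \<in> D" and xy: "x \<noteq> y" and yo: "y \<in> orb f x"
  shows "card (orbs (f \<circ> tr x y) D) = card (orbs f D) + 1"
proof -
  define g where "g = f \<circ> tr x y"
  have gbij: "bij_betw g D D" unfolding g_def using bij_betw_trans[OF bij_tr[OF xD yD] bij] .
  interpret G: perm_on g D using fin gbij by unfold_locales
  define p where "p = per x"
  have p: "0 < p" "(f ^^ p) x = x" using per[OF xD] p_def by auto
  obtain a where a: "a < p" "y = (f ^^ a) x" using yo orb_per[OF xD] p_def by auto
  have a0: "a \<noteq> 0"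
  proof
    assume "a = 0" then show False using a xy by simp
  qed
  have inj: "\<And>i j. i < p \<Longrightarrow> j < p \<Longrightarrow> (f ^^ i) x = (f ^^ j) x \<Longrightarrow> i = j"
    using inj_per[OF xD] p_def unfolding inj_on_def by auto
  have ne_x: "\<And>i. 0 < i \<Longrightarrow> i < p \<Longrightarrow> (f ^^ i) x \<noteq> x"
    using inj[of _ 0] p by fastforce
  have ne_y: "\<And>i. i < p \<Longrightarrow> i \<noteq> a \<Longrightarrow> (f ^^ i) x \<noteq> y"
    using inj a by metis
  have gstep: "\<And>z. z \<noteq> x \<Longrightarrow> z \<noteq> y \<Longrightarrow> g z = f z" unfolding g_def tr_def by simp
  have gx: "g x = (f ^^ Suc a) x" unfolding g_def tr_def using a by simp
  have gy: "g y = f x" unfolding g_def tr_def using xy by simp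
  define O1 where "O1 = {(f ^^ i) x | i. a < i \<and> i \<le> p}"
  define O2 where "O2 = {(f ^^ i) x | i. 0 < i \<and> i \<le> a}"
  have c1: "(g ^^ j) x = (f ^^ (a + j)) x" if "0 < j" "j \<le> p - a" for j
    using that
  proof (induction j)
    case 0 then show ?case by simp
  next
    case (Suc j)
    show ?case
    proof (cases "j = 0")
      case True then show ?thesis using gx by simp
    next
      case False
      then have "(g ^^ j) x = (f ^^ (a + j)) x" using Suc by simp
      moreover have "(f ^^ (a + j)) x \<noteq> x" using ne_x[of "a+j"] Suc False by simp
      moreover have "(f ^^ (a + j)) x \<noteq> y" using ne_y[of "a+j"] Suc False by simp
      ultimately show ?thesis using gstep by simp
    qed
  qed
  have c2: "(g ^^ j) y = (f ^^ j) x" if "0 < j" "j \<le> a" for j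
    using that
  proof (induction j)
    case 0 then show ?case by simp
  next
    case (Suc j)
    show ?case
    proof (cases "j = 0")
      case True then show ?thesis using gy by simp
    next
      case False
      then have "(g ^^ j) y = (f ^^ j) x" using Suc by simp
      moreover have "(f ^^ j) x \<noteq> x" using ne_x[of j] Suc False a by simp
      moreover have "(f ^^ j) x \<noteq> y" using ne_y[of j] Suc False a by simp
      ultimately show ?thesis using gstep by simp
    qed
  qed
  have o1: "orb g x = O1"
  proof
    show "orb g x \<subseteq> O1"
    proof (rule orb_closed)
      show "x \<in> O1" unfolding O1_def using p a by (auto intro!: exI[of _ p])
      fix z assume "z \<in> O1"
      then obtain i where i: "z = (f ^^ i) x" "a < i" "i \<le> p" unfolding O1_def by auto
      show "g z \<in> O1"
      proof (cases "i = p")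
        case True
        then have "g z = (f ^^ Suc a) x" using i p gx by simp
        then show ?thesis unfolding O1_def using a by (auto intro!: exI[of _ "Suc a"])
      next
        case False
        then have "g z = (f ^^ Suc i) x" using i gstep ne_x[of i] ne_y[of i] by simp
        then show ?thesis unfolding O1_def using i False by (auto intro!: exI[of _ "Suc i"])
      qed
    qed
    show "O1 \<subseteq> orb g x"
    proof
      fix z assume "z \<in> O1"
      then obtain i where i: "z = (f ^^ i) x" "a < i" "i \<le> p" unfolding O1_def by auto
      then have "z = (g ^^ (i - a)) x" using c1[of "i - a"] by simp
      then show "z \<in> orb g x" using funpow_in_orb by metis
    qed
  qed
  have o2: "orb g y = O2"
  proof
    show "orb g y \<subseteq> O2"
    proof (rule orb_closed)
      show "y \<in> O2" unfolding O2_def using a a0 by auto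
      fix z assume "z \<in> O2"
      then obtain i where i: "z = (f ^^ i) x" "0 < i" "i \<le> a" unfolding O2_def by auto
      show "g z \<in> O2"
      proof (cases "i = a")
        case True
        then have "g z = (f ^^ 1) x" using i a gy by simp
        then show ?thesis unfolding O2_def using a0 by (auto intro!: exI[of _ 1])
      next
        case False
        then have "g z = (f ^^ Suc i) x" using i gstep ne_x[of i] ne_y[of i] a by simp
        then show ?thesis unfolding O2_def using i False by (auto intro!: exI[of _ "Suc i"])
      qed
    qed
    show "O2 \<subseteq> orb g y"
    proof
      fix z assume "z \<in> O2"
      then obtain i where i: "z = (f ^^ i) x" "0 < i" "i \<le> a" unfolding O2_def by auto
      then have "z = (g ^^ i) y" using c2[of i] by simp
      then show "z \<in> orb g y" using funpow_in_orb by metis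
    qed
  qed
  have oU: "orb f x = O1 \<union> O2"
  proof
    show "orb f x \<subseteq> O1 \<union> O2"
    proof
      fix z assume "z \<in> orb f x"
      then obtain i where i: "i < p" "z = (f ^^ i) x" using orb_per[OF xD] p_def by auto
      show "z \<in> O1 \<union> O2"
      proof (cases "i = 0")
        case True
        then have "z = (f ^^ p) x" using i p by simp
        then show ?thesis unfolding O1_def using a by (auto intro!: exI[of _ p])
      next
        case False
        then show ?thesis unfolding O1_def O2_def using i by (cases "i \<le> a") auto
      qed
    qed
    show "O1 \<union> O2 \<subseteq> orb f x" unfolding O1_def O2_def using funpow_in_orb by fast
  qed
  have disj: "O1 \<inter> O2 = {}"
  proof (rule ccontr)
    assume "O1 \<inter> O2 \<noteq> {}"
    then obtain i j where ij: "a < i" "i \<le> p" "0 < j" "j \<le> a" "(f ^^ i) x = (f ^^ j) x"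
      unfolding O1_def O2_def by auto
    show False
    proof (cases "i = p")
      case True then show False using ij ne_x[of j] p a by simp
    next
      case False then show False using ij inj[of i j] a by simp
    qed
  qed
  have xO1: "x \<in> O1" using o1 self_in_orb by metis
  have yO2: "y \<in> O2" using o2 self_in_orb by metis
  have other: "orb g z = orb f z" if zD: "z \<in> D" and zn: "z \<notin> orb f x" for z
  proof -
    have "(g ^^ k) z = (f ^^ k) z" for k
    proof (induction k)
      case 0 then show ?case by simp
    next
      case (Suc k)
      have m: "(f ^^ k) z \<in> orb f z" by (rule funpow_in_orb)
      have "(f ^^ k) z \<noteq> x"
      proof
        assume "(f ^^ k) z = x"
        then have "orb f x = orb f z" using orb_mem_eq[OF zD] m by metis
        then show False using zn self_in_orb by metis
      qed
      moreover have "(f ^^ k) z \<noteq> y"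
      proof
        assume "(f ^^ k) z = y"
        then have "orb f y = orb f z" using orb_mem_eq[OF zD] m by metis
        moreover have "orb f y = orb f x" using orb_mem_eq[OF xD yo] .
        ultimately show False using zn self_in_orb by metis
      qed
      ultimately show ?case using Suc gstep by simp
    qed
    then show ?thesis unfolding orb_def by simp
  qed
  have eq: "orbs g D = insert O1 (insert O2 (orbs f D - {orb f x}))"
  proof
    show "orbs g D \<subseteq> insert O1 (insert O2 (orbs f D - {orb f x}))"
    proof
      fix P assume "P \<in> orbs g D"
      then obtain z where z: "z \<in> D" "P = orb g z" unfolding orbs_def by auto
      show "P \<in> insert O1 (insert O2 (orbs f D - {orb f x}))"
      proof (cases "z \<in> orb f x")
        case True
        then have "z \<in> O1 \<or> z \<in> O2" using oU by auto
        then show ?thesis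
        proof
          assume "z \<in> O1"
          then have "orb g z = O1" using G.orb_mem_eq[OF xD] o1 by metis
          then show ?thesis using z by simp
        next
          assume "z \<in> O2"
          then have "orb g z = O2" using G.orb_mem_eq[OF yD] o2 by metis
          then show ?thesis using z by simp
        qed
      next
        case False
        then have "P = orb f z" using other z by simp
        moreover have "orb f z \<noteq> orb f x" using False self_in_orb by metis
        ultimately show ?thesis using z unfolding orbs_def by auto
      qed
    qed
    show "insert O1 (insert O2 (orbs f D - {orb f x})) \<subseteq> orbs g D"
    proof
      fix P assume P: "P \<in> insert O1 (insert O2 (orbs f D - {orb f x}))"
      show "P \<in> orbs g D"
      proof -
        { assume "P = O1" then have ?thesis using o1 xD unfolding orbs_def by auto }
        moreover
        { assume "P = O2" then have ?thesis using o2 yD unfolding orbs_def by auto }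
        moreover
        { assume a1: "P \<in> orbs f D - {orb f x}"
          then obtain z where z: "z \<in> D" "P = orb f z" unfolding orbs_def by auto
          have "z \<notin> orb f x"
          proof
            assume "z \<in> orb f x"
            then have "orb f z = orb f x" using orb_mem_eq[OF xD] by metis
            then show False using a1 z by simp
          qed
          then have ?thesis using other z unfolding orbs_def by auto }
        ultimately show ?thesis using P by blast
      qed
    qed
  qed
  have n1: "O1 \<notin> orbs f D - {orb f x}"
  proof
    assume "O1 \<in> orbs f D - {orb f x}"
    then obtain z where z: "z \<in> D" "O1 = orb f z" "orb f z \<noteq> orb f x" unfolding orbs_def by auto
    then have "orb f x = orb f z" using orb_mem_eq[OF z(1)] xO1 by metis
    then show False using z by simp
  qed
  have n2: "O2 \<notin> orbs f D - {orb f x}"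
  proof
    assume "O2 \<in> orbs f D - {orb f x}"
    then obtain z where z: "z \<in> D" "O2 = orb f z" "orb f z \<noteq> orb f x" unfolding orbs_def by auto
    then have "orb f y = orb f z" using orb_mem_eq[OF z(1)] yO2 by metis
    moreover have "orb f y = orb f x" using orb_mem_eq[OF xD yo] .
    ultimately show False using z by simp
  qed
  have n12: "O1 \<noteq> O2" using xO1 disj by auto
  have mem: "orb f x \<in> orbs f D" using xD unfolding orbs_def by auto
  have "card (orbs g D) = card (orbs f D - {orb f x}) + 2"
    unfolding eq using n1 n2 n12 finite_orbs by (simp add: card_insert_if)
  also have "\<dots> = card (orbs f D) + 1"
    using mem finite_orbs card_Diff1_less[of "orbs f D" "orb f x"]
    by (simp add: card_Diff_singleton)
  finally show ?thesis unfolding g_def .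
qed

lemma tr_reach:
  assumes xD: "x \<in> D" and yD: "y \<in> D" and xy: "x \<noteq> y" and yo: "y \<notin> orb f x"
  shows "y \<in> orb (f \<circ> tr x y) x"
proof -
  define g where "g = f \<circ> tr x y"
  define b where "b = per y"
  have b: "0 < b" "(f ^^ b) y = y" using per[OF yD] b_def by auto
  have xn: "x \<notin> orb f y"
  proof
    assume "x \<in> orb f y"
    then have "orb f x = orb f y" using orb_mem_eq[OF yD] by metis
    then show False using yo self_in_orb by metis
  qed
  have c: "(g ^^ j) x = (f ^^ j) y" if "0 < j" "j \<le> b" for j
    using that
  proof (induction j)
    case 0 then show ?case by simp
  next
    case (Suc j)
    show ?case
    proof (cases "j = 0")
      case True then show ?thesis unfolding g_def tr_def by simp
    next
      case False
      then have "(g ^^ j) x = (f ^^ j) y" using Suc by simp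
      moreover have "(f ^^ j) y \<noteq> y" using per_least[of j y] Suc False b_def by simp
      moreover have "(f ^^ j) y \<noteq> x" using xn funpow_in_orb by metis
      ultimately have "g ((g ^^ j) x) = f ((f ^^ j) y)" unfolding g_def tr_def by simp
      then show ?thesis by simp
    qed
  qed
  have "(g ^^ b) x = y" using c[of b] b by simp
  then show ?thesis unfolding g_def using funpow_in_orb by metis
qed

lemma tr_merge:
  assumes xD: "x \<in> D" and yD: "y \<in> D" and xy: "x \<noteq> y" and yo: "y \<notin> orb f x"
  shows "card (orbs (f \<circ> tr x y) D) + 1 = card (orbs f D)"
proof -
  define g where "g = f \<circ> tr x y"
  have gbij: "bij_betw g D D" unfolding g_def using bij_betw_trans[OF bij_tr[OF xD yD] bij] .
  interpret G: perm_on g D using fin gbij by unfold_locales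
  have "card (orbs (g \<circ> tr x y) D) = card (orbs g D) + 1"
    using G.tr_split[OF xD yD xy] tr_reach[OF assms] g_def by simp
  moreover have "g \<circ> tr x y = f" unfolding g_def by (rule ext) simp
  ultimately show ?thesis unfolding g_def by simp
qed

end


definition conn :: "('a \<Rightarrow> 'a) \<Rightarrow> ('a \<Rightarrow> 'a) \<Rightarrow> 'a set \<Rightarrow> ('a \<times> 'a) set" where
  "conn s a D = {(d, a d) | d. d \<in> D} \<union> {(d, s d) | d. d \<in> D} \<union> {(s d, d) | d. d \<in> D}"

definition classes :: "('a \<times> 'a) set \<Rightarrow> 'a set \<Rightarrow> 'a set set" where
  "classes R D = (\<lambda>d. R\<^sup>* `` {d}) ` D"

lemma rt_sym: "sym R \<Longrightarrow> (u, v) \<in> R\<^sup>* \<Longrightarrow> (v, u) \<in> R\<^sup>*"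
  by (metis sym_conv_converse_eq rtrancl_converseI rtrancl_converse)

lemma add_edge_char:
  assumes symR: "sym R" and uv: "(u, v) \<in> (R \<union> {(x, y), (y, x)})\<^sup>*"
  shows "(u, v) \<in> R\<^sup>* \<or> ((u, x) \<in> R\<^sup>* \<and> (y, v) \<in> R\<^sup>*) \<or> ((u, y) \<in> R\<^sup>* \<and> (x, v) \<in> R\<^sup>*)"
  using uv
proof (induction rule: rtrancl_induct)
  case base then show ?case by simp
next
  case (step v w)
  have s: "\<And>p q. (p, q) \<in> R\<^sup>* \<Longrightarrow> (q, p) \<in> R\<^sup>*" using rt_sym[OF symR] by blast
  from step.hyps(2) consider "(v, w) \<in> R" | "v = x" "w = y" | "v = y" "w = x" by blast
  then show ?case
  proof cases
    case 1 then show ?thesis using step.IH by (meson rtrancl.rtrancl_into_rtrancl)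
  next
    case 2 then show ?thesis using step.IH s by (meson rtrancl.rtrancl_refl rtrancl_trans)
  next
    case 3 then show ?thesis using step.IH s by (meson rtrancl.rtrancl_refl rtrancl_trans)
  qed
qed

lemma add_edge_card:
  assumes fin: "finite D" and symR: "sym R" and xD: "x \<in> D" and yD: "y \<in> D"
  shows "card (classes R D) \<le> card (classes (R \<union> {(x, y), (y, x)}) D) + 1"
proof -
  let ?R' = "R \<union> {(x, y), (y, x)}"
  let ?c = "\<lambda>u. R\<^sup>* `` {u}"
  let ?U = "?c x \<union> ?c y"
  have s: "\<And>p q. (p, q) \<in> R\<^sup>* \<Longrightarrow> (q, p) \<in> R\<^sup>*" using rt_sym[OF symR] by blast
  have sub: "R\<^sup>* \<subseteq> ?R'\<^sup>*" by (rule rtrancl_mono) blast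
  have Ux: "?R'\<^sup>* `` {x} = ?U"
  proof
    show "?R'\<^sup>* `` {x} \<subseteq> ?U"
      using add_edge_char[OF symR] s by blast
    have "(x, y) \<in> ?R'\<^sup>*" by blast
    then show "?U \<subseteq> ?R'\<^sup>* `` {x}" using sub by (auto intro: rtrancl_trans)
  qed
  have Umem: "?U \<in> classes ?R' D" unfolding classes_def using Ux xD by (metis image_eqI)
  have incl: "classes R D \<subseteq> insert (?c x) (insert (?c y) (classes ?R' D - {?U}))"
  proof
    fix P assume "P \<in> classes R D"
    then obtain u where u: "u \<in> D" "P = ?c u" unfolding classes_def by auto
    show "P \<in> insert (?c x) (insert (?c y) (classes ?R' D - {?U}))"
    proof (cases "u \<in> ?U")
      case True
      then have "?c u = ?c x \<or> ?c u = ?c y"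
        using s by (auto intro: rtrancl_trans)
      then show ?thesis using u by auto
    next
      case False
      have "?R'\<^sup>* `` {u} = ?c u"
      proof
        show "?R'\<^sup>* `` {u} \<subseteq> ?c u"
        proof
          fix v assume "v \<in> ?R'\<^sup>* `` {u}"
          then have "(u, v) \<in> ?R'\<^sup>*" by simp
          then show "v \<in> ?c u" using add_edge_char[OF symR] False s by blast
        qed
        show "?c u \<subseteq> ?R'\<^sup>* `` {u}" using sub by auto
      qed
      moreover have "?c u \<noteq> ?U" using False by auto
      ultimately show ?thesis using u unfolding classes_def by auto
    qed
  qed
  have finc: "finite (classes ?R' D)" unfolding classes_def using fin by simp
  have "card (classes R D) \<le> card (insert (?c x) (insert (?c y) (classes ?R' D - {?U})))"
    by (rule card_mono[OF _ incl]) (use finc in simp)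
  also have "\<dots> \<le> card (classes ?R' D - {?U}) + 2"
  proof -
    have ins: "\<And>a A. finite A \<Longrightarrow> card (insert a A) \<le> Suc (card A)" by (simp add: card_insert_if)
    have "finite (classes ?R' D - {?U})" using finc by simp
    then show ?thesis using ins[of "insert (?c y) (classes ?R' D - {?U})" "?c x"] ins[of "classes ?R' D - {?U}" "?c y"]
      by simp
  qed
  also have "\<dots> = card (classes ?R' D) + 1"
    using Umem finc by (simp add: card_Diff_singleton) (metis card_0_eq empty_iff Suc_pred not_gr_zero)
  finally show ?thesis .
qed

lemma add_edge_same:
  assumes xy: "(x, y) \<in> R\<^sup>*" and sR: "sym R"
  shows "(R \<union> {(x, y), (y, x)})\<^sup>* = R\<^sup>*"
proof
  have yx: "(y, x) \<in> R\<^sup>*" by (rule rt_sym[OF sR xy])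
  have "R \<union> {(x, y), (y, x)} \<subseteq> R\<^sup>*" using xy yx by blast
  then show "(R \<union> {(x, y), (y, x)})\<^sup>* \<subseteq> R\<^sup>*"
    by (rule rtrancl_subset_rtrancl)
  show "R\<^sup>* \<subseteq> (R \<union> {(x, y), (y, x)})\<^sup>*" by (rule rtrancl_mono) blast
qed

lemma conn_sym:
  assumes "\<And>d. d \<in> D \<Longrightarrow> a d \<in> D \<and> a (a d) = d"
  shows "sym (conn s a D)"
proof (rule symI)
  fix u v assume "(u, v) \<in> conn s a D"
  then consider d where "d \<in> D" "u = d" "v = a d" | d where "d \<in> D" "u = d" "v = s d"
    | d where "d \<in> D" "u = s d" "v = d" unfolding conn_def by blast
  then show "(v, u) \<in> conn s a D"
  proof cases
    case (1 d)
    then have ad: "a d \<in> D" "a (a d) = d" using assms by auto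
    have "(a d, a (a d)) \<in> conn s a D" unfolding conn_def using ad(1) by blast
    then show ?thesis using 1 ad(2) by simp
  next
    case (2 d) then show ?thesis unfolding conn_def by blast
  next
    case (3 d) then show ?thesis unfolding conn_def by blast
  qed
qed

lemma conn_sub: "conn s a D \<subseteq> D \<times> D" if "\<And>d. d \<in> D \<Longrightarrow> a d \<in> D" "s ` D \<subseteq> D"
  unfolding conn_def using that by auto

lemma orb_conn:
  assumes "\<And>d. d \<in> D \<Longrightarrow> a d \<in> D" "s ` D \<subseteq> D" "w \<in> D" "z \<in> orb (s \<circ> a) w"
  shows "(w, z) \<in> (conn s a D)\<^sup>*"
proof -
  obtain k where k: "z = ((s \<circ> a) ^^ k) w" using assms(4) unfolding orb_def by auto
  have "(w, ((s \<circ> a) ^^ k) w) \<in> (conn s a D)\<^sup>* \<and> ((s \<circ> a) ^^ k) w \<in> D"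
  proof (induction k)
    case 0 then show ?case using assms by simp
  next
    case (Suc k)
    define u where "u = ((s \<circ> a) ^^ k) w"
    have uD: "u \<in> D" "(w, u) \<in> (conn s a D)\<^sup>*" using Suc.IH unfolding u_def by (simp_all add: o_def)
    have auD: "a u \<in> D" using uD assms by auto
    have sauD: "s (a u) \<in> D" using auD assms by auto
    have e: "(u, a u) \<in> conn s a D" "(a u, s (a u)) \<in> conn s a D"
      unfolding conn_def using uD auD by auto
    have eq: "((s \<circ> a) ^^ Suc k) w = s (a u)" unfolding u_def by simp
    have "(w, s (a u)) \<in> (conn s a D)\<^sup>*" using uD(2) e by (meson rtrancl.rtrancl_into_rtrancl)
    then show ?case unfolding eq using sauD by simp
  qed
  then show ?thesis using k by simp
qed

lemma genus:
  assumes fin: "finite D" and inv: "\<And>d. d \<in> D \<Longrightarrow> a d \<in> D \<and> a d \<noteq> d \<and> a (a d) = d"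
    and bs: "bij_betw s D D"
  shows "2 * card (orbs s D) + 2 * card (orbs (s \<circ> a) D) \<le> card D + 4 * card (classes (conn s a D) D)"
  using bs
proof (induction "card {d \<in> D. s d \<noteq> d}" arbitrary: s rule: less_induct)
  case less
  note bs = less.prems
  interpret S: perm_on s D using fin bs by unfold_locales
  have abij: "bij_betw a D D" by (rule bij_betw_byWitness[of _ a]) (use inv in auto)
  have pbij: "bij_betw (s \<circ> a) D D" using bij_betw_trans[OF abij bs] .
  interpret P: perm_on "s \<circ> a" D using fin pbij by unfold_locales
  show ?case
  proof (cases "\<forall>d\<in>D. s d = d")
    case True
    have o1: "orb s d = {d}" if "d \<in> D" for d
    proof -
      have "(s ^^ k) d = d" for k by (induction k) (use True that in auto)
      then show ?thesis unfolding orb_def by auto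
    qed
    have "orbs s D = (\<lambda>d. {d}) ` D" unfolding orbs_def using o1 by auto
    then have V: "card (orbs s D) = card D" by (simp add: card_image)
    have o2: "orb (s \<circ> a) d = {d, a d}" if "d \<in> D" for d
    proof
      have "((s \<circ> a) ^^ k) d \<in> {d, a d}" for k
        by (induction k) (use True that inv in auto)
      then show "orb (s \<circ> a) d \<subseteq> {d, a d}" unfolding orb_def by auto
      have "a d = ((s \<circ> a) ^^ 1) d" using True that inv by simp
      then show "{d, a d} \<subseteq> orb (s \<circ> a) d" using self_in_orb funpow_in_orb by (metis empty_subsetI insert_subset)
    qed
    have c2: "(conn s a D)\<^sup>* `` {d} = {d, a d}" if "d \<in> D" for d
    proof
      show "(conn s a D)\<^sup>* `` {d} \<subseteq> {d, a d}"
      proof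
        fix v assume "v \<in> (conn s a D)\<^sup>* `` {d}"
        then have "(d, v) \<in> (conn s a D)\<^sup>*" by simp
        then show "v \<in> {d, a d}"
        proof (induction rule: rtrancl_induct)
          case base then show ?case by simp
        next
          case (step u w)
          then show ?case unfolding conn_def using True that inv by auto
        qed
      qed
      have "(d, a d) \<in> conn s a D" unfolding conn_def using that by auto
      then show "{d, a d} \<subseteq> (conn s a D)\<^sup>* `` {d}" by auto
    qed
    have CF: "classes (conn s a D) D = orbs (s \<circ> a) D"
      unfolding classes_def orbs_def using o2 c2 by (auto simp: image_def)
    have "card D = card (\<Union> (orbs (s \<circ> a) D))"
    proof -
      have "\<Union> (orbs (s \<circ> a) D) = D" unfolding orbs_def using o2 inv by auto
      then show ?thesis by simp
    qed
    also have "\<dots> \<le> sum card (orbs (s \<circ> a) D)"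
      by (rule card_Union_le_sum_card)
    also have "\<dots> \<le> sum (\<lambda>_. 2) (orbs (s \<circ> a) D)"
    proof (rule sum_mono)
      fix P assume "P \<in> orbs (s \<circ> a) D"
      then obtain d where "d \<in> D" "P = {d, a d}" unfolding orbs_def using o2 by auto
      then show "card P \<le> 2" by (simp add: card_insert_if)
    qed
    also have "\<dots> = 2 * card (orbs (s \<circ> a) D)" by simp
    finally show ?thesis using V CF by simp
  next
    case False
    then obtain x where xD: "x \<in> D" and sx: "s x \<noteq> x" by auto
    define y where "y = s x"
    have yD: "y \<in> D" using S.maps xD y_def by auto
    have xy: "x \<noteq> y" using sx y_def by simp
    define s' where "s' = s \<circ> tr x y"
    have bs': "bij_betw s' D D" unfolding s'_def using bij_betw_trans[OF bij_tr[OF xD yD] bs] .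
    interpret S': perm_on s' D using fin bs' by unfold_locales
    have sy: "s y \<noteq> y"
    proof
      assume "s y = y"
      then have "s y = s x" using y_def by simp
      then show False using inj_onD[OF S.inj _ yD xD] xy by auto
    qed
    have less_card: "card {d \<in> D. s' d \<noteq> d} < card {d \<in> D. s d \<noteq> d}"
    proof (rule psubset_card_mono)
      show "finite {d \<in> D. s d \<noteq> d}" using fin by simp
      have "{d \<in> D. s' d \<noteq> d} \<subseteq> {d \<in> D. s d \<noteq> d}"
        unfolding s'_def tr_def using sx y_def by auto
      moreover have "y \<in> {d \<in> D. s d \<noteq> d}" using yD sy by simp
      moreover have "y \<notin> {d \<in> D. s' d \<noteq> d}" unfolding s'_def tr_def using y_def xy by simp
      ultimately show "{d \<in> D. s' d \<noteq> d} \<subset> {d \<in> D. s d \<noteq> d}" by blast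
    qed
    have IH: "2 * card (orbs s' D) + 2 * card (orbs (s' \<circ> a) D) \<le> card D + 4 * card (classes (conn s' a D) D)"
      using less.hyps[OF less_card bs'] .
    have yo: "y \<in> orb s x" unfolding y_def orb_def by (auto intro!: exI[of _ 1])
    have V: "card (orbs s' D) = card (orbs s D) + 1"
      unfolding s'_def using S.tr_split[OF xD yD xy yo] .
    have axD: "a x \<in> D" "a y \<in> D" using inv xD yD by auto
    have axy: "a x \<noteq> a y" using inv xD yD xy by metis
    have phieq: "\<And>d. d \<in> D \<Longrightarrow> (s' \<circ> a) d = ((s \<circ> a) \<circ> tr (a x) (a y)) d"
    proof -
      fix d assume dD: "d \<in> D"
      have "tr x y (a d) = a (tr (a x) (a y) d)"
      proof (cases "d = a x")
        case True then show ?thesis using inv xD yD unfolding tr_def by auto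
      next
        case F1: False
        show ?thesis
        proof (cases "d = a y")
          case True then show ?thesis using inv xD yD F1 xy unfolding tr_def by auto
        next
          case False
          have "a d \<noteq> x" using F1 inv dD by metis
          moreover have "a d \<noteq> y" using False inv dD by metis
          ultimately show ?thesis using F1 False unfolding tr_def by simp
        qed
      qed
      then show "(s' \<circ> a) d = ((s \<circ> a) \<circ> tr (a x) (a y)) d" unfolding s'_def by simp
    qed
    have maps': "(s' \<circ> a) ` D \<subseteq> D" using S'.maps inv by auto
    have orbsF: "orbs (s' \<circ> a) D = orbs ((s \<circ> a) \<circ> tr (a x) (a y)) D"
      by (rule orbs_cong_on[OF phieq maps'])
    define R where "R = conn s a D"
    define R' where "R' = conn s' a D"
    have symR': "sym R'" unfolding R'_def using conn_sym inv by metis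
    have symR: "sym R" unfolding R_def using conn_sym inv by metis
    have RR: "R\<^sup>* = (R' \<union> {(x, y), (y, x)})\<^sup>*"
    proof
      have "R \<subseteq> (R' \<union> {(x, y), (y, x)})\<^sup>*"
      proof
        fix p assume "p \<in> R"
        then consider d where "d \<in> D" "p = (d, a d)" | d where "d \<in> D" "p = (d, s d)"
          | d where "d \<in> D" "p = (s d, d)"
          unfolding R_def conn_def by blast
        then show "p \<in> (R' \<union> {(x, y), (y, x)})\<^sup>*"
        proof cases
          case (1 d) then show ?thesis unfolding R'_def conn_def by blast
        next
          case (2 d)
          have e1: "(x, s' x) \<in> R'" "(s' x, x) \<in> R'" unfolding R'_def conn_def using xD by auto
          have e2: "(d, s' d) \<in> R'" unfolding R'_def conn_def using 2 by auto
          have "s' x = s y" "s' d = s d \<or> d = x \<or> d = y" unfolding s'_def tr_def using xy by auto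
          then show ?thesis using 2 e1 e2 y_def
            by (auto intro: rtrancl_into_rtrancl r_into_rtrancl)
        next
          case (3 d)
          have e1: "(x, s' x) \<in> R'" "(s' x, x) \<in> R'" unfolding R'_def conn_def using xD by auto
          have e2: "(s' d, d) \<in> R'" unfolding R'_def conn_def using 3 by auto
          have "s' x = s y" "s' d = s d \<or> d = x \<or> d = y" unfolding s'_def tr_def using xy by auto
          then show ?thesis using 3 e1 e2 y_def
            by (auto intro: rtrancl_into_rtrancl r_into_rtrancl converse_rtrancl_into_rtrancl)
        qed
      qed
      then show "R\<^sup>* \<subseteq> (R' \<union> {(x, y), (y, x)})\<^sup>*" by (rule rtrancl_subset_rtrancl)
      have "R' \<union> {(x, y), (y, x)} \<subseteq> R\<^sup>*"
      proof
        fix p assume "p \<in> R' \<union> {(x, y), (y, x)}"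
        then consider "p = (x, y)" | "p = (y, x)" | d where "d \<in> D" "p = (d, a d)"
          | d where "d \<in> D" "p = (d, s' d)" | d where "d \<in> D" "p = (s' d, d)"
          unfolding R'_def conn_def by blast
        then show "p \<in> R\<^sup>*"
        proof cases
          case 1 then show ?thesis unfolding R_def conn_def y_def using xD by blast
        next
          case 2 then show ?thesis unfolding R_def conn_def y_def using xD by blast
        next
          case (3 d) then show ?thesis unfolding R_def conn_def by blast
        next
          case (4 d)
          have e: "(x, y) \<in> R" "(y, s y) \<in> R" "(d, s d) \<in> R"
            unfolding R_def conn_def using xD yD 4 y_def by blast+
          have "s' d = s d \<and> d \<noteq> x \<and> d \<noteq> y \<or> (d = x \<and> s' d = s y) \<or> (d = y \<and> s' d = y)"
            unfolding s'_def tr_def y_def using xy y_def by auto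
          then show ?thesis using 4 e by (auto intro: rtrancl_into_rtrancl r_into_rtrancl)
        next
          case (5 d)
          have e: "(y, x) \<in> R" "(s y, y) \<in> R" "(s d, d) \<in> R"
            unfolding R_def conn_def using xD yD 5 y_def by blast+
          have "s' d = s d \<and> d \<noteq> x \<and> d \<noteq> y \<or> (d = x \<and> s' d = s y) \<or> (d = y \<and> s' d = y)"
            unfolding s'_def tr_def y_def using xy y_def by auto
          then show ?thesis using 5 e by (auto intro: rtrancl_into_rtrancl r_into_rtrancl)
        qed
      qed
      then show "(R' \<union> {(x, y), (y, x)})\<^sup>* \<subseteq> R\<^sup>*" by (rule rtrancl_subset_rtrancl)
    qed
    have Ceq: "classes R D = classes (R' \<union> {(x, y), (y, x)}) D"
      unfolding classes_def RR ..
    have C1: "card (classes R' D) \<le> card (classes R D) + 1"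
      using add_edge_card[OF fin symR' xD yD] Ceq by simp
    show ?thesis
    proof (cases "a y \<in> orb (s \<circ> a) (a x)")
      case True
      have "card (orbs ((s \<circ> a) \<circ> tr (a x) (a y)) D) = card (orbs (s \<circ> a) D) + 1"
        using P.tr_split[OF axD axy True] .
      then show ?thesis using IH V C1 orbsF unfolding R_def R'_def by simp
    next
      case False
      have F: "card (orbs ((s \<circ> a) \<circ> tr (a x) (a y)) D) + 1 = card (orbs (s \<circ> a) D)"
        using P.tr_merge[OF axD axy False] .
      have "a y \<in> orb ((s \<circ> a) \<circ> tr (a x) (a y)) (a x)"
        using P.tr_reach[OF axD axy False] .
      then have "a y \<in> orb (s' \<circ> a) (a x)"
        using orb_cong_on[OF phieq maps' axD(1)] by (simp add: o_def)
      then have "(a x, a y) \<in> R'\<^sup>*" unfolding R'_def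
        using orb_conn[of D a s' "a x" "a y"] inv S'.maps axD by blast
      moreover have "(x, a x) \<in> R'" unfolding R'_def conn_def using xD by blast
      moreover have "(a y, y) \<in> R'"
      proof -
        have ay: "a y \<in> D" "a (a y) = y" using inv yD by auto
        have "(a y, a (a y)) \<in> R'" unfolding R'_def conn_def using ay(1) by blast
        then show ?thesis using ay(2) by simp
      qed
      ultimately have "(x, y) \<in> R'\<^sup>*" by (meson converse_rtrancl_into_rtrancl rtrancl.rtrancl_into_rtrancl)
      then have "R\<^sup>* = R'\<^sup>*" using RR add_edge_same[OF _ symR'] by simp
      then have "classes R' D = classes R D" unfolding classes_def by simp
      then show ?thesis using IH V F orbsF unfolding R_def R'_def by simp
    qed
  qed
qed


lemma phi_tr_eq:
  assumes inv: "\<And>d. d \<in> D \<Longrightarrow> a d \<in> D \<and> a d \<noteq> d \<and> a (a d) = d"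
    and xD: "x \<in> D" and yD: "y \<in> D" and xy: "x \<noteq> y" and dD: "d \<in> D"
  shows "((s \<circ> tr x y) \<circ> a) d = ((s \<circ> a) \<circ> tr (a x) (a y)) d"
proof -
  have "tr x y (a d) = a (tr (a x) (a y) d)"
  proof (cases "d = a x")
    case True then show ?thesis using inv xD yD unfolding tr_def by auto
  next
    case F1: False
    show ?thesis
    proof (cases "d = a y")
      case True then show ?thesis using inv xD yD F1 xy unfolding tr_def by auto
    next
      case False
      have "a d \<noteq> x" using F1 inv dD by metis
      moreover have "a d \<noteq> y" using False inv dD by metis
      ultimately show ?thesis using F1 False unfolding tr_def by simp
    qed
  qed
  then show ?thesis by simp
qed

lemma conn_tr_sub:
  assumes xD: "x \<in> D" and yD: "y \<in> D"
  shows "conn s a D \<subseteq> (conn (s \<circ> tr x y) a D \<union> {(x, y), (y, x)})\<^sup>*"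
proof
  let ?s' = "s \<circ> tr x y"
  let ?R' = "conn ?s' a D"
  fix p assume "p \<in> conn s a D"
  then consider d where "d \<in> D" "p = (d, a d)" | d where "d \<in> D" "p = (d, s d)"
    | d where "d \<in> D" "p = (s d, d)"
    unfolding conn_def by blast
  then show "p \<in> (?R' \<union> {(x, y), (y, x)})\<^sup>*"
  proof cases
    case (1 d) then show ?thesis unfolding conn_def by blast
  next
    case (2 d)
    have e1: "(x, ?s' x) \<in> ?R'" "(y, ?s' y) \<in> ?R'" unfolding conn_def using xD yD by blast+
    have e2: "(d, ?s' d) \<in> ?R'" unfolding conn_def using 2 by blast
    have "?s' x = s y" "?s' y = s x" "d \<noteq> x \<and> d \<noteq> y \<longrightarrow> ?s' d = s d" unfolding tr_def by auto
    then show ?thesis using 2 e1 e2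
      by (cases "d = x"; cases "d = y") (auto intro: rtrancl_into_rtrancl r_into_rtrancl converse_rtrancl_into_rtrancl)
  next
    case (3 d)
    have e1: "(?s' x, x) \<in> ?R'" "(?s' y, y) \<in> ?R'" unfolding conn_def using xD yD by blast+
    have e2: "(?s' d, d) \<in> ?R'" unfolding conn_def using 3 by blast
    have "?s' x = s y" "?s' y = s x" "d \<noteq> x \<and> d \<noteq> y \<longrightarrow> ?s' d = s d" unfolding tr_def by auto
    then show ?thesis using 3 e1 e2
      by (cases "d = x"; cases "d = y") (auto intro: rtrancl_into_rtrancl r_into_rtrancl converse_rtrancl_into_rtrancl)
  qed
qed

lemma rt_in_D:
  assumes "R \<subseteq> D \<times> D" "(d, e) \<in> R\<^sup>*" "d \<in> D" shows "e \<in> D"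
  using assms(2,3,1) by (induction rule: rtrancl_induct) auto

lemma split_disconnect:
  assumes fin: "finite D" and inv: "\<And>d. d \<in> D \<Longrightarrow> a d \<in> D \<and> a d \<noteq> d \<and> a (a d) = d"
    and bs: "bij_betw s D D"
    and call: "\<And>d e. d \<in> D \<Longrightarrow> e \<in> D \<Longrightarrow> (d, e) \<in> (conn s a D)\<^sup>*"
    and eul: "2 * card (orbs s D) + 2 * card (orbs (s \<circ> a) D) = 2 * (card D div 2) + 4"
    and uD: "u \<in> D" and vD: "v \<in> D" and uv: "u \<noteq> v"
    and vo: "v \<in> orb s u" and avo: "a v \<in> orb (s \<circ> a) (a u)"
  shows "(u, v) \<notin> (conn (s \<circ> tr u v) a D)\<^sup>*"
proof
  assume uvc: "(u, v) \<in> (conn (s \<circ> tr u v) a D)\<^sup>*"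
  define s' where "s' = s \<circ> tr u v"
  interpret S: perm_on s D using fin bs by unfold_locales
  have abij: "bij_betw a D D" by (rule bij_betw_byWitness[of _ a]) (use inv in auto)
  have pbij: "bij_betw (s \<circ> a) D D" using bij_betw_trans[OF abij bs] .
  interpret P: perm_on "s \<circ> a" D using fin pbij by unfold_locales
  have bs': "bij_betw s' D D" unfolding s'_def using bij_betw_trans[OF bij_tr[OF uD vD] bs] .
  interpret S': perm_on s' D using fin bs' by unfold_locales
  have V: "card (orbs s' D) = card (orbs s D) + 1"
    unfolding s'_def using S.tr_split[OF uD vD uv vo] .
  have auD: "a u \<in> D" "a v \<in> D" using inv uD vD by auto
  have auv: "a u \<noteq> a v" using inv uD vD uv by metis
  have maps': "(s' \<circ> a) ` D \<subseteq> D" using S'.maps inv by auto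
  have orbsF: "orbs (s' \<circ> a) D = orbs ((s \<circ> a) \<circ> tr (a u) (a v)) D"
    by (rule orbs_cong_on[OF _ maps']) (use phi_tr_eq[OF inv uD vD uv] s'_def in auto)
  have F: "card (orbs (s' \<circ> a) D) = card (orbs (s \<circ> a) D) + 1"
    unfolding orbsF using P.tr_split[OF auD auv avo] .
  define R' where "R' = conn s' a D"
  have symR': "sym R'" unfolding R'_def using conn_sym inv by metis
  have sub: "conn s a D \<subseteq> R'\<^sup>*"
    using conn_tr_sub[OF uD vD, of s a] add_edge_same[OF uvc[folded s'_def R'_def] symR']
    unfolding R'_def s'_def by simp
  have R'D: "R' \<subseteq> D \<times> D" unfolding R'_def using conn_sub[of D a s'] inv S'.maps by auto
  have allc: "(d, e) \<in> R'\<^sup>*" if "d \<in> D" "e \<in> D" for d e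
  proof -
    have "(d, e) \<in> (conn s a D)\<^sup>*" using call that by simp
    then show ?thesis using sub by (metis rtrancl_subset_rtrancl subsetD)
  qed
  have cl: "R'\<^sup>* `` {d} = D" if "d \<in> D" for d
    using allc that rt_in_D[OF R'D] by auto
  have "classes R' D = {D}" unfolding classes_def using cl uD by auto
  then have C: "card (classes R' D) = 1" by simp
  have "2 * card (orbs s' D) + 2 * card (orbs (s' \<circ> a) D) \<le> card D + 4 * card (classes (conn s' a D) D)"
    by (rule genus[OF fin inv bs'])
  then have "2 * card (orbs s D) + 2 * card (orbs (s \<circ> a) D) \<le> card D" using V F C R'_def by simp
  moreover have "card D \<le> 2 * (card D div 2) + 1" by simp
  ultimately show False using eul by simp
qed


lemma pbD:
  assumes "plane_bip_map M"
  shows "finite (verts M)" "finite (darts M)" "blacks M \<subseteq> verts M"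
    "\<And>d. d \<in> darts M \<Longrightarrow> src M d \<in> verts M"
    "\<And>d. d \<in> darts M \<Longrightarrow> opp M d \<in> darts M \<and> opp M d \<noteq> d \<and> opp M (opp M d) = d"
    "\<And>d. d \<in> darts M \<Longrightarrow> src M d \<in> blacks M \<longleftrightarrow> src M (opp M d) \<notin> blacks M"
    "bij_betw (nxt M) (darts M) (darts M)"
    "\<And>d. d \<in> darts M \<Longrightarrow> src M (nxt M d) = src M d"
    "\<And>d d'. d \<in> darts M \<Longrightarrow> d' \<in> darts M \<Longrightarrow> src M d = src M d' \<Longrightarrow> \<exists>k. (nxt M ^^ k) d = d'"
    "\<And>u v. u \<in> verts M \<Longrightarrow> v \<in> verts M \<Longrightarrow> (u, v) \<in> (edge_rel M)\<^sup>*"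
    "int (card (verts M)) - int (card (darts M) div 2) + int (card (faces M)) = 2"
  using assms unfolding plane_bip_map_def by blast+

lemma phi_comp: "phi M = nxt M \<circ> opp M"
  unfolding phi_def by (rule ext) simp

lemma face_orbit_orb: "face_orbit M d = orb (phi M) d"
  unfolding face_orbit_def orb_def ..

lemma faces_orbs: "faces M = orbs (phi M) (darts M)"
  unfolding faces_def orbs_def face_orbit_orb ..

locale pbm =
  fixes M :: "('v, 'd) bmap"
  assumes pb: "plane_bip_map M"
begin

abbreviation "D \<equiv> darts M"
abbreviation "s \<equiv> nxt M"
abbreviation "a \<equiv> opp M"

lemma fin: "finite D" using pbD(2)[OF pb] .
lemma inv: "d \<in> D \<Longrightarrow> a d \<in> D \<and> a d \<noteq> d \<and> a (a d) = d" using pbD(5)[OF pb] by blast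
lemma bs: "bij_betw s D D" using pbD(7)[OF pb] .
lemma src_nxt: "d \<in> D \<Longrightarrow> src M (s d) = src M d" using pbD(8)[OF pb] by blast
lemma nxt_trans: "d \<in> D \<Longrightarrow> d' \<in> D \<Longrightarrow> src M d = src M d' \<Longrightarrow> \<exists>k. (s ^^ k) d = d'"
  using pbD(9)[OF pb] by blast
lemma src_in: "d \<in> D \<Longrightarrow> src M d \<in> verts M" using pbD(4)[OF pb] by blast
lemma bip: "d \<in> D \<Longrightarrow> src M d \<in> blacks M \<longleftrightarrow> src M (a d) \<notin> blacks M" using pbD(6)[OF pb] by blast

sublocale S: perm_on s D using fin bs by unfold_locales

lemma abij: "bij_betw a D D" by (rule bij_betw_byWitness[of _ a]) (use inv in auto)
lemma phibij: "bij_betw (phi M) D D"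
  unfolding phi_comp using bij_betw_trans[OF abij bs] .

sublocale P: perm_on "phi M" D using fin phibij by unfold_locales

lemma src_funpow_nxt: "d \<in> D \<Longrightarrow> src M ((s ^^ k) d) = src M d"
  by (induction k) (auto simp: src_nxt S.maps funpow_in)

lemma phi_in: "d \<in> D \<Longrightarrow> phi M d \<in> D" using P.maps by auto

lemma src_phi_black: "d \<in> D \<Longrightarrow> src M (phi M d) \<in> blacks M \<longleftrightarrow> src M d \<notin> blacks M"
  unfolding phi_def using src_nxt inv bip by metis

lemma src_phi_pow_black:
  assumes "d \<in> D" shows "src M ((phi M ^^ k) d) \<in> blacks M \<longleftrightarrow> (src M d \<in> blacks M \<longleftrightarrow> even k)"
proof (induction k)
  case 0 then show ?case by simp
next
  case (Suc k)
  have "(phi M ^^ k) d \<in> D" using assms funpow_in P.maps by metis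
  then show ?case using src_phi_black Suc by simp
qed

lemma verts_src: assumes "d0 \<in> D" shows "verts M = src M ` D"
proof
  show "src M ` D \<subseteq> verts M" using src_in by auto
  show "verts M \<subseteq> src M ` D"
  proof
    fix v assume v: "v \<in> verts M"
    have "(src M d0, v) \<in> (edge_rel M)\<^sup>*" using pbD(10)[OF pb] src_in[OF assms] v by blast
    then show "v \<in> src M ` D"
    proof (cases rule: rtranclE)
      case base then show ?thesis using assms by auto
    next
      case (step u)
      then obtain d where "d \<in> D" "v = src M (a d)" unfolding edge_rel_def by auto
      then show ?thesis using inv by auto
    qed
  qed
qed

lemma orb_nxt: assumes "d \<in> D" shows "orb s d = {e \<in> D. src M e = src M d}"
proof
  show "orb s d \<subseteq> {e \<in> D. src M e = src M d}"
    using S.orb_sub[OF assms] src_funpow_nxt[OF assms] unfolding orb_def by auto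
  show "{e \<in> D. src M e = src M d} \<subseteq> orb s d"
    using nxt_trans assms unfolding orb_def by fastforce
qed

lemma card_verts: assumes "d0 \<in> D" shows "card (verts M) = card (orbs s D)"
proof -
  have "orbs s D = (\<lambda>v. {e \<in> D. src M e = v}) ` (src M ` D)"
    unfolding orbs_def using orb_nxt by (auto simp: image_def)
  moreover have "inj_on (\<lambda>v. {e \<in> D. src M e = v}) (src M ` D)"
    by (rule inj_onI) blast
  ultimately show ?thesis using verts_src[OF assms] by (simp add: card_image)
qed

lemma conn_all:
  assumes dD: "d \<in> D" and eD: "e \<in> D" shows "(d, e) \<in> (conn s a D)\<^sup>*"
proof -
  have nx: "(f, (s ^^ k) f) \<in> (conn s a D)\<^sup>*" if "f \<in> D" for f k
  proof (induction k)
    case 0 then show ?case by simp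
  next
    case (Suc k)
    have "(s ^^ k) f \<in> D" using that funpow_in S.maps by metis
    then have "((s ^^ k) f, s ((s ^^ k) f)) \<in> conn s a D" unfolding conn_def by blast
    then show ?case using Suc by (simp add: rtrancl_into_rtrancl)
  qed
  have "(src M d, v) \<in> (edge_rel M)\<^sup>* \<Longrightarrow> \<forall>e\<in>D. src M e = v \<longrightarrow> (d, e) \<in> (conn s a D)\<^sup>*" for v
  proof (induction rule: rtrancl_induct)
    case base then show ?case using nxt_trans dD nx by metis
  next
    case (step u v)
    then obtain f where f: "f \<in> D" "u = src M f" "v = src M (a f)" unfolding edge_rel_def by auto
    have "(d, f) \<in> (conn s a D)\<^sup>*" using step.IH f by blast
    moreover have "(f, a f) \<in> conn s a D" unfolding conn_def using f by blast
    ultimately have df: "(d, a f) \<in> (conn s a D)\<^sup>*" by (simp add: rtrancl_into_rtrancl)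
    show ?case
    proof (intro ballI impI)
      fix e assume "e \<in> D" "src M e = v"
      then obtain k where "(s ^^ k) (a f) = e" using nxt_trans[of "a f" e] f inv by metis
      then show "(d, e) \<in> (conn s a D)\<^sup>*" using df nx[of "a f" k] inv f by (metis rtrancl_trans)
    qed
  qed
  moreover have "(src M d, src M e) \<in> (edge_rel M)\<^sup>*" using pbD(10)[OF pb] src_in dD eD by blast
  ultimately show ?thesis using eD by blast
qed

lemma euler:
  assumes "d0 \<in> D"
  shows "2 * card (orbs s D) + 2 * card (orbs (s \<circ> a) D) = 2 * (card D div 2) + 4"
proof -
  have "int (card (verts M)) - int (card D div 2) + int (card (faces M)) = 2" using pbD(11)[OF pb] .
  then show ?thesis using card_verts[OF assms] faces_orbs[of M] phi_comp[of M] by simp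
qed

end


lemma chain_contra:
  assumes finK: "finite K" and qK: "q \<in> K" and qt: "q \<noteq> t"
    and succ: "\<And>e. e \<in> K \<Longrightarrow> e \<noteq> t \<Longrightarrow> \<exists>e'\<in>K. (e, e') \<in> Z"
    and noloop: "\<And>x. (x, x) \<notin> Z\<^sup>+"
  shows "(q, t) \<in> Z\<^sup>+"
proof (rule ccontr)
  assume nqt: "(q, t) \<notin> Z\<^sup>+"
  define nx where "nx e = (SOME e'. e' \<in> K \<and> (e, e') \<in> Z)" for e
  have nxp: "nx e \<in> K \<and> (e, nx e) \<in> Z" if "e \<in> K" "e \<noteq> t" for e
  proof -
    have ex: "\<exists>e'. e' \<in> K \<and> (e, e') \<in> Z" using succ[OF that] by blast
    show ?thesis unfolding nx_def using someI_ex[OF ex] .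
  qed
  define x where "x j = (nx ^^ j) q" for j
  have P: "x j \<in> K \<and> x j \<noteq> t \<and> (0 < j \<longrightarrow> (q, x j) \<in> Z\<^sup>+)" for j
  proof (induction j)
    case 0 then show ?case using qK qt x_def by simp
  next
    case (Suc j)
    have xs: "x (Suc j) = nx (x j)" unfolding x_def by simp
    have st: "x (Suc j) \<in> K" "(x j, x (Suc j)) \<in> Z" using nxp Suc xs by auto
    have "(q, x (Suc j)) \<in> Z\<^sup>+"
    proof (cases "j = 0")
      case True then show ?thesis using st x_def by simp
    next
      case False then show ?thesis using Suc st by (meson trancl.trancl_into_trancl gr0I)
    qed
    then show ?case using st nqt by auto
  qed
  have Q: "(x i, x (i + Suc k)) \<in> Z\<^sup>+" for i k
  proof (induction k)
    case 0
    have "x (Suc i) = nx (x i)" unfolding x_def by simp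
    then show ?case using nxp P[of i] by auto
  next
    case (Suc k)
    have "x (Suc (i + Suc k)) = nx (x (i + Suc k))" unfolding x_def by simp
    then have "(x (i + Suc k), x (i + Suc (Suc k))) \<in> Z" using nxp P[of "i + Suc k"] by auto
    then show ?case using Suc by (meson trancl.trancl_into_trancl)
  qed
  have "x ` {..card K} \<subseteq> K" using P by auto
  moreover have "card {..card K} > card K" by simp
  ultimately have "\<not> inj_on x {..card K}"
    using card_inj_on_le[of x "{..card K}" K] finK by (meson not_le)
  then obtain i j where ij: "i \<noteq> j" "x i = x j" unfolding inj_on_def by auto
  then obtain i j where ij: "i < j" "x i = x j" by (metis linorder_neqE_nat)
  then have "(x i, x j) \<in> Z\<^sup>+" using Q[of i "j - i - 1"] by simp
  then show False using ij noloop by simp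
qed

lemma face_no_repeat:
  assumes G: "btb_int M n wb bb a0" and mn: "minimal M n bb"
    and d0D: "d0 \<in> darts M" and d0n: "d0 \<notin> outer_face M a0"
    and p1: "p1 \<in> face_orbit M d0" and p2: "p2 \<in> face_orbit M d0" and p12: "p1 \<noteq> p2"
    and w1: "src M (phi M p1) = w" and w2: "src M (phi M p2) = w" and wW: "w \<in> whites M"
  shows False
proof -
  have pb: "plane_bip_map M" and a0D: "a0 \<in> darts M"
    and bbp: "\<And>i. i < n \<Longrightarrow> bb i \<in> blacks M \<and> src M ((phi M ^^ (2*i+1)) a0) = bb i"
    using G unfolding btb_int_def by auto
  interpret pbm M using pb by unfold_locales
  have mn1: "\<And>d. (d, d) \<notin> (zz_step M n bb)\<^sup>+" and mn2: "\<And>d. (d, a d) \<notin> (zz_step M n bb)\<^sup>+"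
    using mn unfolding minimal_def by auto
  have wB: "w \<notin> blacks M" using wW unfolding whites_def by auto
  have p1o: "p1 \<in> orb (phi M) d0" and p2o: "p2 \<in> orb (phi M) d0"
    using p1 p2 by (simp_all add: face_orbit_orb)
  have p1D: "p1 \<in> D" and p2D: "p2 \<in> D" using p1o p2o P.orb_sub[OF d0D] by auto
  define u where "u = a p1"
  define v where "v = a p2"
  have uD: "u \<in> D" and vD: "v \<in> D" using inv p1D p2D u_def v_def by auto
  have uv: "u \<noteq> v" using inv p1D p2D p12 u_def v_def by metis
  have au: "a u = p1" and av: "a v = p2" using inv p1D p2D u_def v_def by auto
  have srcu: "src M u = w" using w1 src_nxt uD unfolding phi_def u_def by simp
  have srcv: "src M v = w" using w2 src_nxt vD unfolding phi_def v_def by simp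
  have vo: "v \<in> orb s u" using orb_nxt[OF uD] vD srcu srcv by simp
  have o1: "orb (phi M) p1 = orb (phi M) d0" using P.orb_mem_eq[OF d0D p1o] .
  have avo: "a v \<in> orb (s \<circ> a) (a u)" using au av o1 p2o phi_comp by metis
  define s' where "s' = s \<circ> tr u v"
  define R' where "R' = conn s' a D"
  have disc: "(u, v) \<notin> R'\<^sup>*"
    unfolding R'_def s'_def
    by (rule split_disconnect[OF fin inv bs conn_all euler[OF a0D] uD vD uv vo avo]) auto
  have symR': "sym R'" unfolding R'_def using conn_sym inv by metis
  have bs': "bij_betw s' D D" unfolding s'_def using bij_betw_trans[OF bij_tr[OF uD vD] bs] .
  interpret S': perm_on s' D using fin bs' by unfold_locales
  have R'D: "R' \<subseteq> D \<times> D" unfolding R'_def using conn_sub[of D a s'] inv S'.maps by auto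
  have F2: "s' z = s z" if "src M z \<noteq> w" for z
    using that srcu srcv unfolding s'_def tr_def by auto
  have F3: "z \<noteq> p1 \<and> z \<noteq> p2" if "z \<in> orb (phi M) a0" for z
  proof -
    have "d0 \<notin> orb (phi M) a0" using d0n unfolding outer_face_def face_orbit_orb .
    moreover have "orb (phi M) p2 = orb (phi M) d0" using P.orb_mem_eq[OF d0D p2o] .
    moreover have "orb (phi M) z = orb (phi M) a0" using P.orb_mem_eq[OF a0D that] .
    ultimately show ?thesis using o1 self_in_orb by metis
  qed
  have F4: "(a0, (phi M ^^ j) a0) \<in> R'\<^sup>*" for j
  proof (induction j)
    case 0 then show ?case by simp
  next
    case (Suc j)
    define z where "z = (phi M ^^ j) a0"
    have zD: "z \<in> D" using funpow_in P.maps a0D z_def by metis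
    have zn: "z \<noteq> p1" "z \<noteq> p2" using F3 z_def funpow_in_orb by metis+
    have azD: "a z \<in> D" using inv zD by auto
    have "a z \<noteq> u" "a z \<noteq> v" using zn inv zD p1D p2D u_def v_def by metis+
    then have eq: "s' (a z) = phi M z" unfolding s'_def tr_def phi_def by simp
    have "(z, a z) \<in> R'" "(a z, s' (a z)) \<in> R'" unfolding R'_def conn_def using zD azD by blast+
    then have "(z, phi M z) \<in> R'\<^sup>*" using eq by (metis converse_rtrancl_into_rtrancl r_into_rtrancl)
    then show ?case using Suc z_def by (simp add: rtrancl_trans)
  qed
  have F5: "(a0, e) \<in> R'\<^sup>*" if eD: "e \<in> D" and i: "i < n" and se: "src M e = bb i" for e i
  proof -
    define d1 where "d1 = (phi M ^^ (2*i+1)) a0"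
    have d1D: "d1 \<in> D" using funpow_in P.maps a0D d1_def by metis
    have sd1: "src M d1 = bb i" and bbB: "bb i \<in> blacks M" using bbp[OF i] d1_def by auto
    obtain k where k: "(s ^^ k) d1 = e" using nxt_trans[OF d1D eD] sd1 se by metis
    have "(d1, (s ^^ j) d1) \<in> R'\<^sup>*" for j
    proof (induction j)
      case 0 then show ?case by simp
    next
      case (Suc j)
      define z where "z = (s ^^ j) d1"
      have zD: "z \<in> D" using funpow_in S.maps d1D z_def by metis
      have "src M z = bb i" using src_funpow_nxt[OF d1D] sd1 z_def by simp
      then have "s' z = s z" using F2 bbB wB by metis
      then have "(z, s z) \<in> R'" unfolding R'_def conn_def using zD by force
      then show ?case using Suc z_def by (simp add: rtrancl_into_rtrancl)
    qed
    then have "(d1, e) \<in> R'\<^sup>*" using k by metis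
    moreover have "(a0, d1) \<in> R'\<^sup>*" unfolding d1_def by (rule F4)
    ultimately show ?thesis by (meson rtrancl_trans)
  qed
  have main: False if qq: "{q, qb} = {u, v}" "q \<noteq> qb" and qa0: "(q, a0) \<notin> R'\<^sup>*"
    and qqb: "(q, qb) \<notin> R'\<^sup>*" for q qb
  proof -
    define K where "K = R'\<^sup>* `` {q}"
    have qD: "q \<in> D" and qbD: "qb \<in> D" using qq uD vD by auto
    have srcq: "src M q = w" using qq srcu srcv by auto
    have Kin: "e \<in> D" if "e \<in> K" for e using that rt_in_D[OF R'D] qD unfolding K_def by auto
    have Ka: "a e \<in> K" if "e \<in> K" for e
    proof -
      have "(e, a e) \<in> R'" unfolding R'_def conn_def using Kin[OF that] by blast
      then show ?thesis using that unfolding K_def by (auto intro: rtrancl_into_rtrancl)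
    qed
    have qK: "q \<in> K" unfolding K_def by simp
    have qbK: "qb \<notin> K" using qqb unfolding K_def by simp
    have finK: "finite K" using Kin fin by (meson finite_subset subsetI)
    have nobb: "src M e \<notin> bb ` {..<n}" if "e \<in> K" for e
    proof
      assume "src M e \<in> bb ` {..<n}"
      then obtain i where "i < n" "src M e = bb i" by auto
      then have "(a0, e) \<in> R'\<^sup>*" using F5 Kin[OF that] by blast
      then have "(e, a0) \<in> R'\<^sup>*" using rt_sym[OF symR'] by blast
      moreover have "(q, e) \<in> R'\<^sup>*" using that unfolding K_def by simp
      ultimately show False using qa0 by (meson rtrancl_trans)
    qed
    have KG: "e \<in> G_darts M n bb" if "e \<in> K" for e
      unfolding G_darts_def using Kin[OF that] nobb[OF that] nobb[OF Ka[OF that]] by simp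
    have succ: "\<exists>e'\<in>K. (e, e') \<in> zz_step M n bb" if eK: "e \<in> K" and et: "e \<noteq> a q" for e
    proof -
      have aeK: "a e \<in> K" using Ka eK .
      have eD: "e \<in> D" using Kin eK .
      have aeD: "a e \<in> D" using inv eD by auto
      have ae1: "a e \<noteq> q" using et inv eD by metis
      have ae2: "a e \<noteq> qb" using aeK qbK by metis
      have aeuv: "a e \<noteq> u \<and> a e \<noteq> v" using ae1 ae2 qq by auto
      show ?thesis
      proof (cases "src M (a e) \<in> whites M")
        case True
        have eq: "s' (a e) = s (a e)" using aeuv unfolding s'_def tr_def by simp
        have "(a e, s' (a e)) \<in> R'" unfolding R'_def conn_def using aeD by blast
        then have e'K: "s (a e) \<in> K" using aeK eq unfolding K_def by (auto intro: rtrancl_into_rtrancl)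
        have "(e, s (a e)) \<in> zz_step M n bb"
          unfolding zz_step_def using KG[OF eK] KG[OF e'K] True by simp
        then show ?thesis using e'K by blast
      next
        case False
        obtain e' where e'D: "e' \<in> D" and se': "s e' = a e" using S.surj aeD by (metis imageE)
        have "src M e' = src M (a e)" using src_nxt[OF e'D] se' by simp
        then have "src M e' \<noteq> w" using False wW by metis
        then have "s' e' = a e" using F2 se' by simp
        then have "(a e, e') \<in> R'" unfolding R'_def conn_def using e'D by force
        then have e'K: "e' \<in> K" using aeK unfolding K_def by (auto intro: rtrancl_into_rtrancl)
        have "(e, e') \<in> zz_step M n bb"
          unfolding zz_step_def using KG[OF eK] KG[OF e'K] False se' by simp
        then show ?thesis using e'K by blast
      qed
    qed
    have "q \<noteq> a q" using inv qD by metis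
    then have "(q, a q) \<in> (zz_step M n bb)\<^sup>+"
      by (rule chain_contra[OF finK qK _ succ mn1]) auto
    then show False using mn2 by blast
  qed
  show False
  proof (cases "(u, a0) \<in> R'\<^sup>*")
    case True
    have "(v, a0) \<notin> R'\<^sup>*"
    proof
      assume "(v, a0) \<in> R'\<^sup>*"
      then have "(a0, v) \<in> R'\<^sup>*" using rt_sym[OF symR'] by blast
      then show False using True disc by (meson rtrancl_trans)
    qed
    moreover have "(v, u) \<notin> R'\<^sup>*" using disc rt_sym[OF symR'] by blast
    ultimately show False using main[of v u] uv by blast
  next
    case False
    then show False using main[of u v] uv disc by blast
  qed
qed


lemma sumdim:
  fixes S T :: "(complex ^ 'n) set"
  assumes "vec.subspace S" "vec.subspace T"
  shows "vec.dim (vec.span (S \<union> T)) + vec.dim (S \<inter> T) = vec.dim S + vec.dim T"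
proof -
  have "vec.span (S \<union> T) = {x + y | x y. x \<in> S \<and> y \<in> T}"
  proof -
    have e: "vec.span S = S" "vec.span T = T" using assms vec.span_eq_iff by blast+
    show ?thesis using vec.span_Un[of S T] by (simp only: e)
  qed
  then show ?thesis using vec.dim_sums_Int[OF assms] by simp
qed

lemma dimUNIV: "vec.dim (UNIV :: (complex ^ 'n) set) = CARD('n)"
  by (simp add: card_cart_basis)

lemma dim_le_N: "vec.dim (S :: (complex ^ 'n) set) \<le> CARD('n)"
  using vec.dim_subset[of S UNIV] dimUNIV by (metis subset_UNIV)

lemma sub_eq:
  fixes S T :: "(complex ^ 'n) set"
  shows "vec.subspace S \<Longrightarrow> vec.subspace T \<Longrightarrow> S \<subseteq> T \<Longrightarrow> vec.dim T \<le> vec.dim S \<Longrightarrow> S = T"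
  by (rule vec.subspace_dim_equal)

lemma cut_hyper:
  fixes S H :: "(complex ^ 'n) set"
  assumes H: "hyperplane H" and S: "vec.subspace S" and nS: "\<not> S \<subseteq> H"
  shows "vec.dim (S \<inter> H) + 1 = vec.dim S"
proof -
  have sH: "vec.subspace H" and dH: "vec.dim H = CARD('n) - 1" using H unfolding hyperplane_def by auto
  have N: "CARD('n) \<ge> 1" by (simp add: Suc_leI)
  let ?U = "vec.span (S \<union> H)"
  have sU: "vec.subspace ?U" by simp
  have HU: "H \<subseteq> ?U" "S \<subseteq> ?U" using vec.span_superset by blast+
  have "H \<noteq> ?U" using HU nS by auto
  then have "\<not> vec.dim ?U \<le> vec.dim H" using sub_eq[OF sH sU HU(1)] by blast
  then have "vec.dim ?U = CARD('n)" using dH dim_le_N[of ?U] N by linarith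
  then show ?thesis using sumdim[OF S sH] dH N by linarith
qed

lemma pp_ne_span:
  fixes P Q :: "(complex ^ 'n) set"
  assumes P: "ppoint P" and Q: "ppoint Q" and PQ: "P \<noteq> Q"
  shows "vec.dim (vec.span (P \<union> Q)) = 2"
proof -
  have sP: "vec.subspace P" "vec.dim P = 1" using P unfolding ppoint_def by auto
  have sQ: "vec.subspace Q" "vec.dim Q = 1" using Q unfolding ppoint_def by auto
  have sI: "vec.subspace (P \<inter> Q)" using vec.subspace_inter sP sQ by blast
  have "vec.dim (P \<inter> Q) \<le> 1" using vec.dim_subset[of "P \<inter> Q" P] sP by simp
  moreover have "vec.dim (P \<inter> Q) \<noteq> 1"
  proof
    assume d1: "vec.dim (P \<inter> Q) = 1"
    have "P \<inter> Q = P" using sub_eq[OF sI sP(1)] d1 sP by simp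
    moreover have "P \<inter> Q = Q" using sub_eq[OF sI sQ(1)] d1 sQ by simp
    ultimately show False using PQ by simp
  qed
  ultimately have "vec.dim (P \<inter> Q) = 0" by linarith
  then show ?thesis using sumdim[OF sP(1) sQ(1)] sP sQ by linarith
qed

lemma line_eq:
  fixes L P Q :: "(complex ^ 'n) set"
  assumes L: "vec.subspace L" "vec.dim L = 2" and P: "ppoint P" and Q: "ppoint Q"
    and PQ: "P \<noteq> Q" and PL: "P \<subseteq> L" and QL: "Q \<subseteq> L"
  shows "vec.span (P \<union> Q) = L"
proof -
  have "vec.span (P \<union> Q) \<subseteq> L" using vec.span_minimal PL QL L by blast
  then show ?thesis using sub_eq[of "vec.span (P \<union> Q)" L] pp_ne_span[OF P Q PQ] L by simp
qed

lemma three_ne: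
  fixes X Y Z :: "(complex ^ 'n) set"
  assumes Y: "ppoint Y" and Z: "ppoint Z" and d3: "vec.dim (vec.span (X \<union> Y \<union> Z)) = 3"
  shows "X \<noteq> Y"
proof
  assume "X = Y"
  then have "vec.span (X \<union> Y \<union> Z) = vec.span (Y \<union> Z)" by simp
  moreover have "vec.dim (vec.span (Y \<union> Z)) \<le> 2"
    using sumdim[of Y Z] Y Z unfolding ppoint_def by simp
  ultimately show False using d3 by simp
qed

lemma meet:
  fixes A B C H :: "(complex ^ 'n) set"
  assumes H: "hyperplane H" and A: "ppoint A" and B: "ppoint B" and C: "ppoint C"
    and d3: "vec.dim (vec.span (A \<union> B \<union> C)) = 3" and nB: "\<not> B \<subseteq> H"
  shows "vec.span (A \<union> B) \<inter> H \<noteq> vec.span (B \<union> C) \<inter> H"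
proof
  assume eq: "vec.span (A \<union> B) \<inter> H = vec.span (B \<union> C) \<inter> H"
  let ?L1 = "vec.span (A \<union> B)" and ?L2 = "vec.span (B \<union> C)"
  have sB: "vec.subspace B" "vec.dim B = 1" using B unfolding ppoint_def by auto
  have "vec.span (A \<union> B \<union> C) \<subseteq> vec.span (?L1 \<union> ?L2)"
    by (rule vec.span_mono) (use vec.span_superset in blast)
  then have "vec.dim (vec.span (A \<union> B \<union> C)) \<le> vec.dim (vec.span (?L1 \<union> ?L2))"
    by (rule vec.dim_subset)
  then have g3: "vec.dim (vec.span (?L1 \<union> ?L2)) \<ge> 3" using d3 by linarith
  have AB: "A \<noteq> B" using three_ne[OF B C d3] .
  have dL1: "vec.dim ?L1 = 2" using pp_ne_span[OF A B AB] .
  have "vec.dim ?L2 + vec.dim (B \<inter> C) = vec.dim B + vec.dim C"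
    using sumdim[of B C] B C unfolding ppoint_def by simp
  then have dL2: "vec.dim ?L2 \<le> 2" using B C unfolding ppoint_def by linarith
  have "vec.dim (vec.span (?L1 \<union> ?L2)) + vec.dim (?L1 \<inter> ?L2) = vec.dim ?L1 + vec.dim ?L2"
    by (rule sumdim) simp_all
  then have dI: "vec.dim (?L1 \<inter> ?L2) \<le> 1" using g3 dL1 dL2 by linarith
  have sI: "vec.subspace (?L1 \<inter> ?L2)" by (simp add: vec.subspace_inter)
  have BI: "B \<subseteq> ?L1 \<inter> ?L2" using vec.span_superset by blast
  have BeqI: "B = ?L1 \<inter> ?L2" using sub_eq[OF sB(1) sI BI] dI sB by simp
  have nL1: "\<not> ?L1 \<subseteq> H" using nB vec.span_superset by blast
  have "vec.dim (?L1 \<inter> H) + 1 = vec.dim ?L1" using cut_hyper[OF H _ nL1] by simp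
  then have dQ: "vec.dim (?L1 \<inter> H) = 1" using dL1 by linarith
  have sQ: "vec.subspace (?L1 \<inter> H)" using H unfolding hyperplane_def by (simp add: vec.subspace_inter)
  have "?L1 \<inter> H \<subseteq> B" using eq BeqI by blast
  then have "?L1 \<inter> H = B" using sub_eq[OF sQ sB(1)] dQ sB by simp
  then show False using nB by blast
qed

lemma tri_sec:
  fixes X Y Z H :: "(complex ^ 'n) set"
  assumes H: "hyperplane H" and X: "ppoint X" and Y: "ppoint Y" and Z: "ppoint Z"
    and d3: "vec.dim (vec.span (X \<union> Y \<union> Z)) = 3"
    and nX: "\<not> X \<subseteq> H" and nY: "\<not> Y \<subseteq> H" and nZ: "\<not> Z \<subseteq> H"
  shows "tcd_triple (vec.span (X \<union> Y) \<inter> H) (vec.span (Y \<union> Z) \<inter> H) (vec.span (X \<union> Z) \<inter> H)"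
proof -
  have sH: "vec.subspace H" using H unfolding hyperplane_def by auto
  have d3': "vec.dim (vec.span (Y \<union> Z \<union> X)) = 3" "vec.dim (vec.span (Y \<union> X \<union> Z)) = 3"
    "vec.dim (vec.span (X \<union> Z \<union> Y)) = 3"
    using d3 by (simp_all add: Un_ac)
  have XY: "X \<noteq> Y" using three_ne[OF Y Z d3] .
  have YZ: "Y \<noteq> Z" using three_ne[OF Z X d3'(1)] .
  have XZ: "X \<noteq> Z" using three_ne[OF Z Y d3'(3)] .
  have pt: "ppoint (vec.span (U \<union> V) \<inter> H)" if U: "ppoint U" and V: "ppoint V" and UV: "U \<noteq> V"
    and nU: "\<not> U \<subseteq> H" for U V
  proof -
    have "\<not> vec.span (U \<union> V) \<subseteq> H" using nU vec.span_superset by blast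
    then have "vec.dim (vec.span (U \<union> V) \<inter> H) + 1 = 2"
      using cut_hyper[OF H] pp_ne_span[OF U V UV] by (metis vec.subspace_span)
    then show ?thesis unfolding ppoint_def using sH by (simp add: vec.subspace_inter)
  qed
  have p1: "ppoint (vec.span (X \<union> Y) \<inter> H)" using pt[OF X Y XY nX] .
  have p2: "ppoint (vec.span (Y \<union> Z) \<inter> H)" using pt[OF Y Z YZ nY] .
  have p3: "ppoint (vec.span (X \<union> Z) \<inter> H)" using pt[OF X Z XZ nX] .
  have n12: "vec.span (X \<union> Y) \<inter> H \<noteq> vec.span (Y \<union> Z) \<inter> H" using meet[OF H X Y Z d3 nY] .
  have n23: "vec.span (Y \<union> Z) \<inter> H \<noteq> vec.span (X \<union> Z) \<inter> H"
    using meet[OF H Y Z X d3'(1) nZ] by (simp add: Un_ac)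
  have n13: "vec.span (X \<union> Y) \<inter> H \<noteq> vec.span (X \<union> Z) \<inter> H"
    using meet[OF H Y X Z d3'(2) nX] by (simp add: Un_ac)
  let ?P = "vec.span (X \<union> Y \<union> Z)"
  have "X \<subseteq> ?P" using vec.span_superset[of "X \<union> Y \<union> Z"] by blast
  then have nP: "\<not> ?P \<subseteq> H" using nX by blast
  have "vec.dim (?P \<inter> H) + 1 = 3" using cut_hyper[OF H _ nP] d3 by simp
  then have pl: "pline (?P \<inter> H)" unfolding pline_def using sH by (simp add: vec.subspace_inter)
  have s1: "vec.span (X \<union> Y) \<subseteq> ?P" "vec.span (Y \<union> Z) \<subseteq> ?P" "vec.span (X \<union> Z) \<subseteq> ?P"
    by (rule vec.span_mono; blast)+
  have "collinear3 (vec.span (X \<union> Y) \<inter> H) (vec.span (Y \<union> Z) \<inter> H) (vec.span (X \<union> Z) \<inter> H)"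
    unfolding collinear3_def using pl s1 by blast
  then show ?thesis unfolding tcd_triple_def using p1 p2 p3 n12 n23 n13 by simp
qed


lemma tri_bounds: "tri i k A \<Longrightarrow> (x, y, z) \<in> A \<Longrightarrow> i \<le> x \<and> x < y \<and> y < z \<and> z \<le> k"
proof (induction arbitrary: x y z rule: tri.induct)
  case (tri_edge i) then show ?case by simp
next
  case (tri_split i j k A B)
  then show ?case by fastforce
qed

locale S8 =
  fixes M :: "('v, 'd) bmap" and n :: nat and wb bb :: "nat \<Rightarrow> 'v" and a0 :: 'd
    and T :: "'v \<Rightarrow> (complex ^ 'n) set" and H :: "(complex ^ 'n) set"
  assumes G: "btb_int M n wb bb a0" and mn: "minimal M n bb" and tcd: "tcd_map M n bb T"
    and gen1: "one_generic M n wb a0 T" and genH: "generic_hyperplane M T H"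
begin

lemma pb: "plane_bip_map M" using G unfolding btb_int_def by auto

sublocale pbm M using pb by unfold_locales

lemma a0D: "a0 \<in> D" using G unfolding btb_int_def by auto
lemma bbB: "i < n \<Longrightarrow> bb i \<in> blacks M" using G unfolding btb_int_def by auto
lemma deg_bb: "i < n \<Longrightarrow> degree M (bb i) = 2" using G unfolding btb_int_def by auto
lemma deg3: "b \<in> blacks M \<Longrightarrow> b \<notin> bb ` {..<n} \<Longrightarrow> degree M b = 3"
  using G unfolding btb_int_def by auto

lemma deg_ge2: assumes "b \<in> blacks M" shows "2 \<le> degree M b"
  using deg_bb deg3 assms by (cases "b \<in> bb ` {..<n}") auto

lemma darts_at_orb: "e \<in> D \<Longrightarrow> darts_at M (src M e) = orb s e"
  unfolding darts_at_def using orb_nxt by auto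

lemma fin_da: "finite (darts_at M b)" unfolding darts_at_def using fin by simp

lemma nofix: assumes eD: "e \<in> D" and bl: "src M e \<in> blacks M" shows "s e \<noteq> e"
proof
  assume se: "s e = e"
  have "(s ^^ k) e = e" for k by (induction k) (use se in auto)
  then have "orb s e = {e}" unfolding orb_def by auto
  then have "degree M (src M e) = 1" unfolding degree_def using darts_at_orb[OF eD] by simp
  then show False using deg_ge2[OF bl] by simp
qed

lemma whiteT: "w \<in> whites M \<Longrightarrow> ppoint (T w)" using tcd unfolding tcd_map_def by auto

lemma target_white: assumes "b \<in> blacks M" "e \<in> darts_at M b" shows "src M (a e) \<in> whites M"
proof -
  have eD: "e \<in> D" and se: "src M e = b" using assms(2) unfolding darts_at_def by auto
  have "src M (a e) \<notin> blacks M" using bip[OF eD] se assms(1) by simp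
  moreover have "src M (a e) \<in> verts M" using src_in inv eD by blast
  ultimately show ?thesis unfolding whites_def by simp
qed

lemma nbr_mem: "e \<in> darts_at M b \<Longrightarrow> src M (a e) \<in> white_nbrs M b"
  unfolding white_nbrs_def by blast

lemma TB1:
  assumes bB: "b \<in> blacks M" and nb: "b \<notin> bb ` {..<n}"
    and e1: "e1 \<in> darts_at M b" and e2: "e2 \<in> darts_at M b" and e12: "e1 \<noteq> e2"
  shows "T (src M (a e1)) \<noteq> T (src M (a e2)) \<and>
    (\<forall>w \<in> white_nbrs M b. T w \<subseteq> vec.span (T (src M (a e1)) \<union> T (src M (a e2))))"
proof -
  have dg: "card (darts_at M b) = 3" using deg3[OF bB nb] unfolding degree_def .
  have "card (darts_at M b - {e1, e2}) = 1"
    using dg e1 e2 e12 fin_da by (simp add: card_Diff_subset)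
  then obtain e3 where e3: "e3 \<in> darts_at M b" "e3 \<noteq> e1" "e3 \<noteq> e2"
    by (metis One_nat_def card_eq_SucD insertI1 DiffD1 DiffD2 insertCI)
  have all: "darts_at M b = {e1, e2, e3}"
    using card_subset_eq[OF fin_da, of "{e1, e2, e3}"] e1 e2 e3 e12 dg by auto
  have Gb: "b \<in> G_blacks M n bb" unfolding G_blacks_def using bB nb by simp
  let ?x = "src M (a e1)" and ?y = "src M (a e2)" and ?z = "src M (a e3)"
  have all3: "\<And>d1 d2 d3. d1 \<in> darts_at M b \<Longrightarrow> d2 \<in> darts_at M b \<Longrightarrow> d3 \<in> darts_at M b
      \<Longrightarrow> d1 \<noteq> d2 \<and> d2 \<noteq> d3 \<and> d1 \<noteq> d3
      \<Longrightarrow> tcd_triple (T (src M (a d1))) (T (src M (a d2))) (T (src M (a d3)))"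
    using tcd Gb unfolding tcd_map_def by blast
  have tt: "tcd_triple (T ?x) (T ?y) (T ?z)"
    by (rule all3[OF e1 e2 e3(1)]) (use e3 e12 in auto)
  then obtain L where L: "pline L" "T ?x \<subseteq> L" "T ?y \<subseteq> L" "T ?z \<subseteq> L"
    and pp: "ppoint (T ?x)" "ppoint (T ?y)" and ne: "T ?x \<noteq> T ?y"
    unfolding tcd_triple_def collinear3_def by blast
  have sL: "vec.subspace L" "vec.dim L = 2" using L(1) unfolding pline_def by auto
  have eqL: "vec.span (T ?x \<union> T ?y) = L" using line_eq[OF sL pp ne L(2) L(3)] .
  have "white_nbrs M b = {?x, ?y, ?z}" unfolding white_nbrs_def all by auto
  then show ?thesis using ne eqL L by auto
qed

lemma TB2:
  assumes bB: "b \<in> bb ` {..<n}"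
    and e1: "e1 \<in> darts_at M b" and e2: "e2 \<in> darts_at M b" and e12: "e1 \<noteq> e2"
  shows "white_nbrs M b = {src M (a e1), src M (a e2)}"
proof -
  have dg: "card (darts_at M b) = 2" using deg_bb bB unfolding degree_def by auto
  have all: "darts_at M b = {e1, e2}"
    using card_subset_eq[OF fin_da, of "{e1, e2}"] e1 e2 e12 dg by auto
  then show ?thesis unfolding white_nbrs_def by auto
qed

lemma Jof:
  assumes bB: "b \<in> blacks M" and e1: "e1 \<in> darts_at M b" and e2: "e2 \<in> darts_at M b"
    and e12: "e1 \<noteq> e2" and ne: "T (src M (a e1)) \<noteq> T (src M (a e2))"
  shows "vec.span (\<Union>w\<in>white_nbrs M b. T w) = vec.span (T (src M (a e1)) \<union> T (src M (a e2)))"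
proof
  let ?x = "src M (a e1)" and ?y = "src M (a e2)"
  have "T ?x \<union> T ?y \<subseteq> (\<Union>w\<in>white_nbrs M b. T w)" using nbr_mem[OF e1] nbr_mem[OF e2] by blast
  then show "vec.span (T ?x \<union> T ?y) \<subseteq> vec.span (\<Union>w\<in>white_nbrs M b. T w)" by (rule vec.span_mono)
  have "T w \<subseteq> vec.span (T ?x \<union> T ?y)" if "w \<in> white_nbrs M b" for w
  proof (cases "b \<in> bb ` {..<n}")
    case True
    then have "w = ?x \<or> w = ?y" using TB2[OF True e1 e2 e12] that by auto
    then show ?thesis using vec.span_superset by blast
  next
    case False
    then show ?thesis using TB1[OF bB False e1 e2 e12] that by blast
  qed
  then show "vec.span (\<Union>w\<in>white_nbrs M b. T w) \<subseteq> vec.span (T ?x \<union> T ?y)"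
    by (intro vec.span_minimal) auto
qed

end


context S8 begin

abbreviation "ph \<equiv> phi M"

lemma fsD: "d0 \<in> face_starts M a0 \<Longrightarrow> d0 \<in> D \<and> d0 \<notin> outer_face M a0 \<and> src M d0 \<in> blacks M"
  unfolding face_starts_def by auto

lemma ph_in: "d0 \<in> D \<Longrightarrow> (ph ^^ k) d0 \<in> D" using funpow_in P.maps by metis

lemma per_face:
  assumes d0D: "d0 \<in> D" and bl: "src M d0 \<in> blacks M"
  shows "card (face_orbit M d0) = 2 * fdeg M d0" "(ph ^^ (2 * fdeg M d0)) d0 = d0"
proof -
  have c: "card (face_orbit M d0) = P.per d0" using P.card_orb[OF d0D] face_orbit_orb by metis
  have "src M ((ph ^^ P.per d0) d0) = src M d0" using P.per[OF d0D] by simp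
  then have "even (P.per d0)" using src_phi_pow_black[OF d0D, of "P.per d0"] bl by simp
  then show "card (face_orbit M d0) = 2 * fdeg M d0" unfolding fdeg_def c by simp
  then show "(ph ^^ (2 * fdeg M d0)) d0 = d0" using c P.per[OF d0D] by simp
qed

lemma fw_white: assumes "d0 \<in> D" "src M d0 \<in> blacks M" shows "fw M d0 j \<in> whites M"
proof -
  have "src M ((ph ^^ (2*j+1)) d0) \<notin> blacks M" using src_phi_pow_black[OF assms(1), of "Suc (2*j)"] assms(2) by simp
  moreover have "src M ((ph ^^ (2*j+1)) d0) \<in> verts M" using src_in ph_in assms(1) by blast
  ultimately show ?thesis unfolding fw_def whites_def by simp
qed

lemma fb_black: assumes "d0 \<in> D" "src M d0 \<in> blacks M" shows "fb M d0 j \<in> blacks M"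
  using src_phi_pow_black[OF assms(1), of "2*j"] assms(2) unfolding fb_def by simp

lemma E1: assumes d0D: "d0 \<in> D"
  shows "(ph ^^ (2*j)) d0 \<in> darts_at M (fb M d0 j) \<and> src M (a ((ph ^^ (2*j)) d0)) = fw M d0 j"
proof -
  define e where "e = (ph ^^ (2*j)) d0"
  have eD: "e \<in> D" unfolding e_def by (rule ph_in[OF d0D])
  have aeD: "a e \<in> D" using inv eD by auto
  have "src M (a e) = src M (s (a e))" using src_nxt[OF aeD] by simp
  also have "s (a e) = (ph ^^ (2*j+1)) d0" unfolding e_def by (simp add: phi_def)
  finally have "src M (a e) = fw M d0 j" unfolding fw_def .
  moreover have "e \<in> darts_at M (fb M d0 j)" unfolding darts_at_def fb_def e_def using eD e_def by simp
  ultimately show ?thesis unfolding e_def by simp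
qed

lemma E2: assumes d0D: "d0 \<in> D"
  shows "a ((ph ^^ (2*j+1)) d0) \<in> darts_at M (fb M d0 (Suc j)) \<and>
         src M (a (a ((ph ^^ (2*j+1)) d0))) = fw M d0 j"
proof -
  define e where "e = (ph ^^ (2*j+1)) d0"
  have eD: "e \<in> D" unfolding e_def by (rule ph_in[OF d0D])
  have aeD: "a e \<in> D" using inv eD by auto
  have "src M (a e) = src M (s (a e))" using src_nxt[OF aeD] by simp
  also have "s (a e) = (ph ^^ (2 * Suc j)) d0" unfolding e_def by (simp add: phi_def)
  finally have "src M (a e) = fb M d0 (Suc j)" unfolding fb_def .
  then have "a e \<in> darts_at M (fb M d0 (Suc j))" unfolding darts_at_def using aeD by simp
  moreover have "src M (a (a e)) = fw M d0 j" using inv eD unfolding fw_def e_def by simp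
  ultimately show ?thesis unfolding e_def by simp
qed

lemma Ediff: assumes d0D: "d0 \<in> D" and bl: "src M d0 \<in> blacks M"
  shows "(ph ^^ (2 * Suc j)) d0 \<noteq> a ((ph ^^ (2*j+1)) d0)"
proof
  define e where "e = a ((ph ^^ (2*j+1)) d0)"
  assume eq: "(ph ^^ (2 * Suc j)) d0 = a ((ph ^^ (2*j+1)) d0)"
  have "(ph ^^ (2 * Suc j)) d0 = s e" unfolding e_def by (simp add: phi_def)
  then have se: "s e = e" using eq e_def by simp
  have eD: "e \<in> D" using E2[OF d0D, of j] e_def unfolding darts_at_def by simp
  have "src M e = fb M d0 (Suc j)" using E2[OF d0D, of j] e_def unfolding darts_at_def by simp
  then have "src M e \<in> blacks M" using fb_black[OF d0D bl] by simp
  then show False using nofix[OF eD] se by simp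
qed

lemma fw_distinct:
  assumes fs: "d0 \<in> face_starts M a0" and j1: "j1 < fdeg M d0" and j2: "j2 < fdeg M d0"
    and j12: "j1 \<noteq> j2"
  shows "fw M d0 j1 \<noteq> fw M d0 j2"
proof
  assume eq: "fw M d0 j1 = fw M d0 j2"
  have d0D: "d0 \<in> D" and d0n: "d0 \<notin> outer_face M a0" and bl: "src M d0 \<in> blacks M"
    using fsD[OF fs] by auto
  define p1 where "p1 = (ph ^^ (2*j1)) d0"
  define p2 where "p2 = (ph ^^ (2*j2)) d0"
  have p1o: "p1 \<in> face_orbit M d0" "p2 \<in> face_orbit M d0"
    unfolding p1_def p2_def face_orbit_orb by (simp_all add: funpow_in_orb)
  have per: "P.per d0 = 2 * fdeg M d0"
    using per_face[OF d0D bl] P.card_orb[OF d0D] face_orbit_orb by metis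
  have "p1 \<noteq> p2"
  proof
    assume "p1 = p2"
    moreover have "2*j1 \<in> {..<P.per d0}" "2*j2 \<in> {..<P.per d0}" using j1 j2 per by auto
    ultimately have "2*j1 = 2*j2" using P.inj_per[OF d0D] unfolding p1_def p2_def inj_on_def by blast
    then show False using j12 by simp
  qed
  moreover have "src M (ph p1) = fw M d0 j1" "src M (ph p2) = fw M d0 j2"
    unfolding p1_def p2_def fw_def by simp_all
  ultimately show False
    using face_no_repeat[OF G mn d0D d0n p1o(1) p1o(2)] eq fw_white[OF d0D bl] by metis
qed

lemma face2:
  assumes fs: "d \<in> face_starts M a0" and f2: "fdeg M d = 2" and b: "b = fb M d 0 \<or> b = fb M d 1"
  shows "b \<in> blacks M \<and> (\<exists>e1 e2. e1 \<in> darts_at M b \<and> e2 \<in> darts_at M b \<and> e1 \<noteq> e2 \<and>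
           src M (a e1) = fw M d 0 \<and> src M (a e2) = fw M d 1)"
proof -
  have dD: "d \<in> D" and bl: "src M d \<in> blacks M" using fsD[OF fs] by auto
  have p4: "(ph ^^ 4) d = d" using per_face(2)[OF dD bl] f2 by simp
  have bB: "b \<in> blacks M" using b fb_black[OF dD bl] by auto
  show ?thesis
  proof (cases "b = fb M d 0")
    case True
    have a1: "d \<in> darts_at M (fb M d 0)" "src M (a d) = fw M d 0" using E1[OF dD, of 0] by simp_all
    have fb2: "fb M d 2 = fb M d 0" unfolding fb_def using p4 by simp
    have a2: "a ((ph ^^ 3) d) \<in> darts_at M (fb M d 0)" "src M (a (a ((ph ^^ 3) d))) = fw M d 1"
      using E2[OF dD, of 1] fb2 by (simp_all add: numeral_eq_Suc)
    have ne: "d \<noteq> a ((ph ^^ 3) d)" using Ediff[OF dD bl, of 1] p4 by (simp add: numeral_eq_Suc)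
    show ?thesis using bB a1 a2 ne True by blast
  next
    case False
    then have bb1: "b = fb M d 1" using b by simp
    have a1: "a ((ph ^^ 1) d) \<in> darts_at M (fb M d 1)" "src M (a (a ((ph ^^ 1) d))) = fw M d 0"
      using E2[OF dD, of 0] by simp_all
    have a2: "(ph ^^ 2) d \<in> darts_at M (fb M d 1)" "src M (a ((ph ^^ 2) d)) = fw M d 1"
      using E1[OF dD, of 1] by simp_all
    have ne: "a ((ph ^^ 1) d) \<noteq> (ph ^^ 2) d" using Ediff[OF dD bl, of 0] by simp
    show ?thesis using bB a1 a2 ne bb1 by blast
  qed
qed

end


context S8 begin

lemma Jstep:
  assumes sL: "vec.subspace \<Lambda>" and dL: "vec.dim \<Lambda> = 2"
    and J1: "b1 \<in> blacks M" "vec.span (\<Union>w\<in>white_nbrs M b1. T w) = \<Lambda>"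
    and pr: "(b1, b2) \<in> merge_rel M a0 \<union> (merge_rel M a0)\<inverse>"
  shows "b2 \<in> blacks M \<and> vec.span (\<Union>w\<in>white_nbrs M b2. T w) = \<Lambda>"
proof -
  obtain d where fs: "d \<in> face_starts M a0" and f2: "fdeg M d = 2"
    and bs: "(b1 = fb M d 0 \<and> b2 = fb M d 1) \<or> (b1 = fb M d 1 \<and> b2 = fb M d 0)"
    using pr unfolding merge_rel_def by blast
  let ?x = "fw M d 0" and ?y = "fw M d 1"
  have b1f: "b1 = fb M d 0 \<or> b1 = fb M d 1" and b2f: "b2 = fb M d 0 \<or> b2 = fb M d 1" using bs by auto
  obtain e1 e2 where e: "e1 \<in> darts_at M b1" "e2 \<in> darts_at M b1" "e1 \<noteq> e2"
    "src M (a e1) = ?x" "src M (a e2) = ?y"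
    using face2[OF fs f2 b1f] by blast
  obtain f1 f2' where f: "f1 \<in> darts_at M b2" "f2' \<in> darts_at M b2" "f1 \<noteq> f2'"
    "src M (a f1) = ?x" "src M (a f2') = ?y"
    using face2[OF fs f2 b2f] by blast
  have b2B: "b2 \<in> blacks M" using face2[OF fs f2 b2f] by blast
  have xW: "?x \<in> whites M" using target_white[OF J1(1) e(1)] e(4) by simp
  have ne: "T ?x \<noteq> T ?y"
  proof (cases "b1 \<in> bb ` {..<n}")
    case True
    have "white_nbrs M b1 = {?x, ?y}" using TB2[OF True e(1,2,3)] e(4,5) by simp
    then have L: "\<Lambda> = vec.span (T ?x \<union> T ?y)" using J1(2) by simp
    show ?thesis
    proof
      assume eq: "T ?x = T ?y"
      have px: "vec.subspace (T ?x)" "vec.dim (T ?x) = 1" using whiteT[OF xW] unfolding ppoint_def by auto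
      have "\<Lambda> = T ?x" using L eq px(1) vec.span_eq_iff by simp
      then show False using dL px(2) by simp
    qed
  next
    case False
    then show ?thesis using TB1[OF J1(1) False e(1,2,3)] e(4,5) by simp
  qed
  have "vec.span (\<Union>w\<in>white_nbrs M b1. T w) = vec.span (T ?x \<union> T ?y)"
    using Jof[OF J1(1) e(1,2,3)] e(4,5) ne by simp
  moreover have "vec.span (\<Union>w\<in>white_nbrs M b2. T w) = vec.span (T ?x \<union> T ?y)"
    using Jof[OF b2B f(1,2,3)] f(4,5) ne by simp
  ultimately show ?thesis using J1(2) b2B by simp
qed

lemma merged_span:
  assumes sL: "vec.subspace \<Lambda>" and dL: "vec.dim \<Lambda> = 2"
    and J0: "b0 \<in> blacks M" "vec.span (\<Union>w\<in>white_nbrs M b0. T w) = \<Lambda>"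
  shows "vec.span (\<Union>w\<in>merged_faces M a0 b0. T w) = \<Lambda>"
proof
  have cls: "b' \<in> blacks M \<and> vec.span (\<Union>w\<in>white_nbrs M b'. T w) = \<Lambda>"
    if "(b0, b') \<in> (merge_rel M a0 \<union> (merge_rel M a0)\<inverse>)\<^sup>*" for b'
    using that
  proof (induction rule: rtrancl_induct)
    case base then show ?case using J0 by simp
  next
    case (step u v)
    then show ?case using Jstep[OF sL dL] by blast
  qed
  have "T w \<subseteq> \<Lambda>" if wm: "w \<in> merged_faces M a0 b0" for w
  proof -
    obtain b' where b': "(b0, b') \<in> (merge_rel M a0 \<union> (merge_rel M a0)\<inverse>)\<^sup>*" "w \<in> white_nbrs M b'"
      using wm unfolding merged_faces_def by auto
    have "T w \<subseteq> (\<Union>w\<in>white_nbrs M b'. T w)" using b'(2) by blast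
    also have "\<dots> \<subseteq> vec.span (\<Union>w\<in>white_nbrs M b'. T w)" by (rule vec.span_superset)
    finally show ?thesis using cls[OF b'(1)] by simp
  qed
  then show "vec.span (\<Union>w\<in>merged_faces M a0 b0. T w) \<subseteq> \<Lambda>"
    by (intro vec.span_minimal sL) blast
  have "white_nbrs M b0 \<subseteq> merged_faces M a0 b0" unfolding merged_faces_def by auto
  then have "vec.span (\<Union>w\<in>white_nbrs M b0. T w) \<subseteq> vec.span (\<Union>w\<in>merged_faces M a0 b0. T w)"
    by (intro vec.span_mono) blast
  then show "\<Lambda> \<subseteq> vec.span (\<Union>w\<in>merged_faces M a0 b0. T w)" using J0(2) by simp
qed

lemma gen3:
  assumes fs: "d0 \<in> face_starts M a0" and j: "j1 < fdeg M d0" "j2 < fdeg M d0" "j3 < fdeg M d0"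
    and d: "j1 \<noteq> j2" "j2 \<noteq> j3" "j1 \<noteq> j3"
  shows "vec.dim (vec.span (T (fw M d0 j1) \<union> T (fw M d0 j2) \<union> T (fw M d0 j3))) = 3"
proof -
  have d0D: "d0 \<in> D" and d0n: "d0 \<notin> outer_face M a0" and bl: "src M d0 \<in> blacks M"
    using fsD[OF fs] by auto
  have inner: "face_orbit M d0 \<in> inner_faces M a0"
    unfolding inner_faces_def faces_def outer_face_def
    using d0D d0n self_in_orb[of d0 "phi M"] face_orbit_orb outer_face_def by (metis DiffI image_eqI singletonD)
  have fwF: "fw M d0 j \<in> face_whites M (face_orbit M d0)" for j
  proof -
    have "(ph ^^ (2*j+1)) d0 \<in> face_orbit M d0" unfolding face_orbit_orb by (rule funpow_in_orb)
    then show ?thesis unfolding face_whites_def fw_def using fw_white[OF d0D bl, of j] unfolding fw_def by blast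
  qed
  have dist: "fw M d0 j1 \<noteq> fw M d0 j2" "fw M d0 j2 \<noteq> fw M d0 j3" "fw M d0 j1 \<noteq> fw M d0 j3"
    using fw_distinct[OF fs] j d by auto
  show ?thesis using gen1 inner fwF dist unfolding one_generic_def by blast
qed

lemma TWne:
  assumes fs: "d0 \<in> face_starts M a0" and k3: "3 \<le> fdeg M d0"
    and j: "j1 < fdeg M d0" "j2 < fdeg M d0" and d: "j1 \<noteq> j2"
  shows "T (fw M d0 j1) \<noteq> T (fw M d0 j2)"
proof -
  have d0D: "d0 \<in> D" and bl: "src M d0 \<in> blacks M" using fsD[OF fs] by auto
  have "\<exists>r::nat. r < 3 \<and> r \<noteq> j1 \<and> r \<noteq> j2" by presburger
  then obtain r where r: "r < 3" "r \<noteq> j1" "r \<noteq> j2" by blast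
  have "vec.dim (vec.span (T (fw M d0 j1) \<union> T (fw M d0 j2) \<union> T (fw M d0 r))) = 3"
    using gen3[OF fs j] r k3 d by auto
  then show ?thesis using three_ne whiteT fw_white[OF d0D bl] by metis
qed

lemma side_span:
  assumes fs: "d0 \<in> face_starts M a0" and k3: "3 \<le> fdeg M d0" and pq: "p < q" and qk: "q \<le> fdeg M d0 - 1"
  shows "vec.span (\<Union>w\<in>side_faces M a0 d0 p q. T w) = vec.span (T (fw M d0 p) \<union> T (fw M d0 q))"
proof -
  have d0D: "d0 \<in> D" and bl: "src M d0 \<in> blacks M" using fsD[OF fs] by auto
  let ?k = "fdeg M d0"
  have ne: "T (fw M d0 p) \<noteq> T (fw M d0 q)" using TWne[OF fs k3] pq qk k3 by simp
  have ppp: "ppoint (T (fw M d0 p))" "ppoint (T (fw M d0 q))" using whiteT fw_white[OF d0D bl] by auto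
  let ?L = "vec.span (T (fw M d0 p) \<union> T (fw M d0 q))"
  have sL: "vec.subspace ?L" by simp
  have dL: "vec.dim ?L = 2" using pp_ne_span[OF ppp ne] .
  show ?thesis
  proof (cases "q = Suc p")
    case True
    have e1: "a ((ph ^^ (2*p+1)) d0) \<in> darts_at M (fb M d0 q)" "src M (a (a ((ph ^^ (2*p+1)) d0))) = fw M d0 p"
      using E2[OF d0D, of p] True by simp_all
    have e2: "(ph ^^ (2*q)) d0 \<in> darts_at M (fb M d0 q)" "src M (a ((ph ^^ (2*q)) d0)) = fw M d0 q"
      using E1[OF d0D, of q] by simp_all
    have e12: "a ((ph ^^ (2*p+1)) d0) \<noteq> (ph ^^ (2*q)) d0" using Ediff[OF d0D bl, of p] True by metis
    have "vec.span (\<Union>w\<in>white_nbrs M (fb M d0 q). T w) = ?L"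
      using Jof[OF fb_black[OF d0D bl] e1(1) e2(1) e12] e1(2) e2(2) ne by simp
    then have "vec.span (\<Union>w\<in>merged_faces M a0 (fb M d0 q). T w) = ?L"
      using merged_span[OF sL dL fb_black[OF d0D bl]] by simp
    then show ?thesis unfolding side_faces_def using True by simp
  next
    case F1: False
    show ?thesis
    proof (cases "p = 0 \<and> q = ?k - 1")
      case True
      have pk: "(ph ^^ (2 * ?k)) d0 = d0" using per_face(2)[OF d0D bl] .
      have kk: "Suc (?k - 1) = ?k" using k3 by simp
      have fbk: "fb M d0 ?k = fb M d0 0" unfolding fb_def using pk by simp
      have e1: "d0 \<in> darts_at M (fb M d0 0)" "src M (a d0) = fw M d0 0" using E1[OF d0D, of 0] by simp_all
      have e2: "a ((ph ^^ (2*(?k - 1)+1)) d0) \<in> darts_at M (fb M d0 0)"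
        "src M (a (a ((ph ^^ (2*(?k - 1)+1)) d0))) = fw M d0 (?k - 1)"
        using E2[OF d0D, of "?k - 1"] kk fbk by simp_all
      have e12: "d0 \<noteq> a ((ph ^^ (2*(?k - 1)+1)) d0)" using Ediff[OF d0D bl, of "?k - 1"] kk pk by simp
      have "vec.span (\<Union>w\<in>white_nbrs M (fb M d0 0). T w) = ?L"
        using Jof[OF fb_black[OF d0D bl] e1(1) e2(1) e12] e1(2) e2(2) ne True by simp
      then have "vec.span (\<Union>w\<in>merged_faces M a0 (fb M d0 0). T w) = ?L"
        using merged_span[OF sL dL fb_black[OF d0D bl]] by simp
      then show ?thesis unfolding side_faces_def using True F1 by simp
    next
      case False
      then have "side_faces M a0 d0 p q = {fw M d0 p, fw M d0 q}" unfolding side_faces_def using F1 by auto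
      then show ?thesis by simp
    qed
  qed
qed

lemma final:
  assumes ch: "sigma_choice M a0 R tc" and d0R: "d0 \<in> R" and t: "(x, y, z) \<in> tc d0"
  shows "tcd_triple (section_pt T H (side_faces M a0 d0 x y))
                    (section_pt T H (side_faces M a0 d0 y z))
                    (section_pt T H (side_faces M a0 d0 x z))"
proof -
  have fs: "d0 \<in> face_starts M a0" and k3: "3 \<le> fdeg M d0" and tr: "tri 0 (fdeg M d0 - 1) (tc d0)"
    using ch d0R unfolding sigma_choice_def by auto
  have d0D: "d0 \<in> D" and bl: "src M d0 \<in> blacks M" using fsD[OF fs] by auto
  have b: "x < y" "y < z" "z \<le> fdeg M d0 - 1" using tri_bounds[OF tr t] by auto
  have Hh: "hyperplane H" and nH: "\<And>w. w \<in> whites M \<Longrightarrow> \<not> T w \<subseteq> H"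
    using genH unfolding generic_hyperplane_def by auto
  let ?X = "T (fw M d0 x)" and ?Y = "T (fw M d0 y)" and ?Z = "T (fw M d0 z)"
  have pp: "ppoint ?X" "ppoint ?Y" "ppoint ?Z" using whiteT fw_white[OF d0D bl] by auto
  have nn: "\<not> ?X \<subseteq> H" "\<not> ?Y \<subseteq> H" "\<not> ?Z \<subseteq> H" using nH fw_white[OF d0D bl] by auto
  have d3: "vec.dim (vec.span (?X \<union> ?Y \<union> ?Z)) = 3" using gen3[OF fs] b k3 by simp
  have s1: "section_pt T H (side_faces M a0 d0 x y) = vec.span (?X \<union> ?Y) \<inter> H"
    unfolding section_pt_def using side_span[OF fs k3] b by simp
  have s2: "section_pt T H (side_faces M a0 d0 y z) = vec.span (?Y \<union> ?Z) \<inter> H"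
    unfolding section_pt_def using side_span[OF fs k3] b by simp
  have s3: "section_pt T H (side_faces M a0 d0 x z) = vec.span (?X \<union> ?Z) \<inter> H"
    unfolding section_pt_def using side_span[OF fs k3] b by simp
  show ?thesis unfolding s1 s2 s3 by (rule tri_sec[OF Hh pp d3 nn])
qed

end


theorem proposition8p5:
  fixes M :: "('v, 'd) bmap"
    and n :: nat and wb bb :: "nat \<Rightarrow> 'v" and a0 :: 'd
    and T :: "'v \<Rightarrow> (complex ^ 'n) set" and H :: "(complex ^ 'n) set"
    and R :: "'d set" and tc :: "'d \<Rightarrow> (nat \<times> nat \<times> nat) set"
  assumes d_ge_2: "CARD('n) \<ge> 3"
    and G: "btb_int M n wb bb a0"
    and min: "minimal M n bb"
    and tcd: "tcd_map M n bb T"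
    and gen1: "one_generic M n wb a0 T"
    and genH: "generic_hyperplane M T H"
    and choice: "sigma_choice M a0 R tc"
  shows "\<forall>d0\<in>R. \<forall>(x, y, z)\<in>tc d0.
           tcd_triple (section_pt T H (side_faces M a0 d0 x y))
                      (section_pt T H (side_faces M a0 d0 y z))
                      (section_pt T H (side_faces M a0 d0 x z))"
proof -
  interpret S: S8 M n wb bb a0 T H using G min tcd gen1 genH by unfold_locales
  show ?thesis using S.final[OF choice] by blast
qed

end
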